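(* Let $G$ be a $3$-edge colorable cubic graph, and let $\{G_i\}$ be a decomposition of $G$ along nontrivial $2$-edge cuts or $3$-edge cuts. Then $K'(G,3)=\prod_i K'(G_i,3)$.
   Context: Graphs are finite; multiple edges allowed, loops not. Let $G$ be cubic. For a $3$-edge cut $E_C=\{s_{11}s_{21},s_{12}s_{22},s_{13}s_{23}\}$ with the $s_{1j}$ on one side and the $s_{2j}$ on the other, let $G_1',G_2'$ be the subgraphs induced on the two sides of $G\setminus E_C$; $G_i$ is obtained from $G_i'$ by adding a new vertex $v_i$ joined to $s_{i1},s_{i2},s_{i3}$. For a $2$-edge cut $E_C=\{s_{11}s_{21},s_{12}s_{22}\}$, $G_i$ is obtained from $G_i'$ by adding the edge $s_{i1}s_{i2}$. The cut is nontrivial if both $G_1$ and $G_2$ have fewer vertices than $G$. A decomposition of $G$ along such cuts is a collection of graphs obtained from $\{G\}$ by repeatedly replacing a member by the two graphs $G_1,G_2$ arising from a nontrivial $2$- or $3$-edge cut of it. A proper $3$-edge coloring uses colors $\{1,2,3\}$ with adjacent edges colored differently; an edge-Kempe chain (colors $a\neq b$) is a connected component of the subgraph of edges colored $a$ or $b$, and an edge-Kempe switch swaps $a,b$ on one chain. $K'(G,3)$ is the number of classes of proper $3$-edge colorings under the equivalence generated by edge-Kempe switches. *)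

theory Defs
  imports Main "HOL-Library.Multiset"
begin

text \<open>Finite multigraphs without loops. Vertices and edges are natural numbers;
  each edge has a set of two distinct endpoints (so parallel edges are allowed,
  loops are not).\<close>

record mgraph =
  verts :: "nat set"
  edges :: "nat set"
  ends  :: "nat \<Rightarrow> nat set"

definition wf_graph :: "mgraph \<Rightarrow> bool" where
  "wf_graph G \<longleftrightarrow> finite (verts G) \<and> finite (edges G) \<and>
     (\<forall>e\<in>edges G. ends G e \<subseteq> verts G \<and> card (ends G e) = 2)"

definition degree :: "mgraph \<Rightarrow> nat \<Rightarrow> nat" where
  "degree G v = card {e\<in>edges G. v \<in> ends G e}"

definition cubic :: "mgraph \<Rightarrow> bool" where
  "cubic G \<longleftrightarrow> wf_graph G \<and> (\<forall>v\<in>verts G. degree G v = 3)"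

definition proper_col :: "mgraph \<Rightarrow> (nat \<Rightarrow> nat) \<Rightarrow> bool" where
  "proper_col G c \<longleftrightarrow>
     (\<forall>e. e \<notin> edges G \<longrightarrow> c e = 0) \<and>
     (\<forall>e\<in>edges G. c e \<in> {1,2,3}) \<and>
     (\<forall>e\<in>edges G. \<forall>f\<in>edges G. e \<noteq> f \<and> ends G e \<inter> ends G f \<noteq> {} \<longrightarrow> c e \<noteq> c f)"

definition colorings :: "mgraph \<Rightarrow> (nat \<Rightarrow> nat) set" where
  "colorings G = {c. proper_col G c}"

definition colorable3 :: "mgraph \<Rightarrow> bool" where
  "colorable3 G \<longleftrightarrow> colorings G \<noteq> {}"

definition ab_link :: "mgraph \<Rightarrow> (nat \<Rightarrow> nat) \<Rightarrow> nat \<Rightarrow> nat \<Rightarrow> (nat \<times> nat) set" where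
  "ab_link G c a b = {(x,y). x \<in> edges G \<and> y \<in> edges G \<and> c x \<in> {a,b} \<and> c y \<in> {a,b}
                             \<and> ends G x \<inter> ends G y \<noteq> {}}"

definition kempe_chain :: "mgraph \<Rightarrow> (nat \<Rightarrow> nat) \<Rightarrow> nat \<Rightarrow> nat \<Rightarrow> nat set \<Rightarrow> bool" where
  "kempe_chain G c a b K \<longleftrightarrow> a \<noteq> b \<and> a \<in> {1,2,3} \<and> b \<in> {1,2,3} \<and>
     (\<exists>e\<in>edges G. c e \<in> {a,b} \<and>
        K = {f\<in>edges G. c f \<in> {a,b} \<and> (e,f) \<in> (ab_link G c a b)\<^sup>*})"

definition kempe_swap :: "(nat \<Rightarrow> nat) \<Rightarrow> nat \<Rightarrow> nat \<Rightarrow> nat set \<Rightarrow> nat \<Rightarrow> nat" where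
  "kempe_swap c a b K = (\<lambda>f. if f \<in> K then (if c f = a then b else if c f = b then a else c f) else c f)"

definition kempe_step :: "mgraph \<Rightarrow> (nat \<Rightarrow> nat) \<Rightarrow> (nat \<Rightarrow> nat) \<Rightarrow> bool" where
  "kempe_step G c d \<longleftrightarrow> proper_col G c \<and>
     (\<exists>a b K. kempe_chain G c a b K \<and> d = kempe_swap c a b K)"

definition kempe_rel :: "mgraph \<Rightarrow> ((nat \<Rightarrow> nat) \<times> (nat \<Rightarrow> nat)) set" where
  "kempe_rel G = (({(c,d). kempe_step G c d} \<union> {(c,d). kempe_step G d c})\<^sup>*)
                  \<inter> (colorings G \<times> colorings G)"

definition Kp :: "mgraph \<Rightarrow> nat" where
  "Kp G = card (colorings G // kempe_rel G)"

definition crossing :: "mgraph \<Rightarrow> nat set \<Rightarrow> nat set \<Rightarrow> nat set" where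
  "crossing G S1 S2 = {e\<in>edges G. ends G e \<inter> S1 \<noteq> {} \<and> ends G e \<inter> S2 \<noteq> {}}"

definition inside :: "mgraph \<Rightarrow> nat set \<Rightarrow> nat set" where
  "inside G S = {e\<in>edges G. ends G e \<subseteq> S}"

text \<open>G1 = G[S1] plus a fresh vertex v1 joined to x1,x2,x3 (the new edges reuse the
  names e1,e2,e3); symmetrically for G2.\<close>

definition split3 :: "mgraph \<Rightarrow> mgraph \<Rightarrow> mgraph \<Rightarrow> bool" where
  "split3 G G1 G2 \<longleftrightarrow>
    (\<exists>S1 S2 e1 e2 e3 x1 x2 x3 y1 y2 y3 v1 v2.
       S1 \<union> S2 = verts G \<and> S1 \<inter> S2 = {} \<and>
       distinct [e1,e2,e3] \<and> crossing G S1 S2 = {e1,e2,e3} \<and>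
       ends G e1 = {x1,y1} \<and> ends G e2 = {x2,y2} \<and> ends G e3 = {x3,y3} \<and>
       x1 \<in> S1 \<and> x2 \<in> S1 \<and> x3 \<in> S1 \<and> y1 \<in> S2 \<and> y2 \<in> S2 \<and> y3 \<in> S2 \<and>
       v1 \<notin> verts G \<and> v2 \<notin> verts G \<and>
       G1 = \<lparr>verts = S1 \<union> {v1}, edges = inside G S1 \<union> {e1,e2,e3},
             ends = (ends G)(e1 := {x1,v1}, e2 := {x2,v1}, e3 := {x3,v1})\<rparr> \<and>
       G2 = \<lparr>verts = S2 \<union> {v2}, edges = inside G S2 \<union> {e1,e2,e3},
             ends = (ends G)(e1 := {y1,v2}, e2 := {y2,v2}, e3 := {y3,v2})\<rparr>)"

text \<open>Splitting along a 2-edge cut {e1,e2}, e_j = x_j y_j: G1 = G[S1] plus the edge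
  x1 x2 (named e1), G2 = G[S2] plus the edge y1 y2 (named e1). Endpoints of the new
  edges must be distinct, as loops are not allowed.\<close>

definition split2 :: "mgraph \<Rightarrow> mgraph \<Rightarrow> mgraph \<Rightarrow> bool" where
  "split2 G G1 G2 \<longleftrightarrow>
    (\<exists>S1 S2 e1 e2 x1 x2 y1 y2.
       S1 \<union> S2 = verts G \<and> S1 \<inter> S2 = {} \<and>
       e1 \<noteq> e2 \<and> crossing G S1 S2 = {e1,e2} \<and>
       ends G e1 = {x1,y1} \<and> ends G e2 = {x2,y2} \<and>
       x1 \<in> S1 \<and> x2 \<in> S1 \<and> y1 \<in> S2 \<and> y2 \<in> S2 \<and> x1 \<noteq> x2 \<and> y1 \<noteq> y2 \<and>
       G1 = \<lparr>verts = S1, edges = inside G S1 \<union> {e1}, ends = (ends G)(e1 := {x1,x2})\<rparr> \<and>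
       G2 = \<lparr>verts = S2, edges = inside G S2 \<union> {e1}, ends = (ends G)(e1 := {y1,y2})\<rparr>)"

definition nontrivial_split :: "mgraph \<Rightarrow> mgraph \<Rightarrow> mgraph \<Rightarrow> bool" where
  "nontrivial_split G G1 G2 \<longleftrightarrow>
     (split2 G G1 G2 \<or> split3 G G1 G2) \<and>
     card (verts G1) < card (verts G) \<and> card (verts G2) < card (verts G)"

inductive decomposition :: "mgraph \<Rightarrow> mgraph multiset \<Rightarrow> bool" for G where
  base: "decomposition G {#G#}"
| step: "decomposition G M \<Longrightarrow> H \<in># M \<Longrightarrow> nontrivial_split H H1 H2 \<Longrightarrow>
         decomposition G (M - {#H#} + {#H1, H2#})"

end

theory Submission
  imports Defs
begin

definition restr :: "nat set \<Rightarrow> (nat \<Rightarrow> nat) \<Rightarrow> nat \<Rightarrow> nat" where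
  "restr E c = (\<lambda>f. if f \<in> E then c f else 0)"

definition closedU :: "mgraph \<Rightarrow> (nat \<Rightarrow> nat) \<Rightarrow> nat \<Rightarrow> nat \<Rightarrow> nat set \<Rightarrow> bool" where
  "closedU G c a b U \<longleftrightarrow> U \<subseteq> {e\<in>edges G. c e \<in> {a,b}} \<and>
     (\<forall>e\<in>U. \<forall>f\<in>edges G. c f \<in> {a,b} \<and> ends G e \<inter> ends G f \<noteq> {} \<longrightarrow> f \<in> U)"

definition tr :: "nat \<Rightarrow> nat \<Rightarrow> nat \<Rightarrow> nat" where
  "tr a b x = (if x = a then b else if x = b then a else x)"

definition cs :: "mgraph \<Rightarrow> ((nat \<Rightarrow> nat) \<times> (nat \<Rightarrow> nat)) set" where
  "cs G = {(c,d). proper_col G c \<and> (\<exists>a b U. a \<noteq> b \<and> a \<in> {1,2,3} \<and> b \<in> {1,2,3} \<and>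
      closedU G c a b U \<and> d = kempe_swap c a b U)}"

lemma swap_swap: "kempe_swap (kempe_swap c a b U) a b U = c"
  by (auto simp: kempe_swap_def)

lemma swap_ab: "(kempe_swap c a b U f \<in> {a,b}) = (c f \<in> {a,b})"
  by (auto simp: kempe_swap_def)

lemma closedU_swap: "closedU G (kempe_swap c a b U) a b V \<longleftrightarrow> closedU G c a b V"
  unfolding closedU_def using swap_ab[of c a b U] by blast

lemma swap_proper:
  assumes p: "proper_col G c" and ab: "a \<in> {1,2,3}" "b \<in> {1,2,3}" and cl: "closedU G c a b U"
  shows "proper_col G (kempe_swap c a b U)"
proof -
  have U: "U \<subseteq> edges G" using cl by (auto simp: closedU_def)
  show ?thesis unfolding proper_col_def
  proof (intro conjI ballI allI impI)
    fix e assume "e \<notin> edges G" thus "kempe_swap c a b U e = 0" using U p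
      by (auto simp: kempe_swap_def proper_col_def)
  next
    fix e assume "e \<in> edges G" thus "kempe_swap c a b U e \<in> {1,2,3}" using p ab
      by (auto simp: kempe_swap_def proper_col_def)
  next
    fix e f assume e: "e \<in> edges G" and f: "f \<in> edges G" and ne: "e \<noteq> f \<and> ends G e \<inter> ends G f \<noteq> {}"
    have cef: "c e \<noteq> c f" using p e f ne by (auto simp: proper_col_def)
    have ne2: "ends G f \<inter> ends G e \<noteq> {}" using ne by blast
    show "kempe_swap c a b U e \<noteq> kempe_swap c a b U f"
    proof (cases "e \<in> U")
      case True
      then show ?thesis
      proof (cases "f \<in> U")
        case True
        then show ?thesis using \<open>e\<in>U\<close> cef by (auto simp: kempe_swap_def)
      next
        case False
        have "c e \<in> {a,b}" using True cl by (auto simp: closedU_def)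
        moreover have "c f \<notin> {a,b}" using cl True False f ne unfolding closedU_def by blast
        ultimately show ?thesis using True False by (auto simp: kempe_swap_def)
      qed
    next
      case False
      then show ?thesis
      proof (cases "f \<in> U")
        case True
        have "c f \<in> {a,b}" using True cl by (auto simp: closedU_def)
        moreover have "c e \<notin> {a,b}" using cl True False e ne2 unfolding closedU_def by blast
        ultimately show ?thesis using True False by (auto simp: kempe_swap_def)
      next
        case False
        then show ?thesis using \<open>e\<notin>U\<close> cef by (auto simp: kempe_swap_def)
      qed
    qed
  qed
qed

lemma link_swap: "ab_link G (kempe_swap c a b K) a b = ab_link G c a b"
  unfolding ab_link_def using swap_ab[of c a b K] by blast

lemma chain_closed:
  assumes "kempe_chain G c a b K"
  shows "closedU G c a b K"
proof -
  obtain e where e: "e \<in> edges G" "c e \<in> {a,b}"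
    and K: "K = {f\<in>edges G. c f \<in> {a,b} \<and> (e,f) \<in> (ab_link G c a b)\<^sup>*}"
    using assms by (auto simp: kempe_chain_def)
  show ?thesis unfolding closedU_def
  proof (intro conjI ballI impI)
    show "K \<subseteq> {e \<in> edges G. c e \<in> {a, b}}" using K by auto
  next
    fix f g assume f: "f \<in> K" and g: "g \<in> edges G" and h: "c g \<in> {a,b} \<and> ends G f \<inter> ends G g \<noteq> {}"
    have "(f,g) \<in> ab_link G c a b" using f g h K by (auto simp: ab_link_def)
    hence "(e,g) \<in> (ab_link G c a b)\<^sup>*" using f K by auto
    thus "g \<in> K" using K g h by auto
  qed
qed

lemma closed_to_steps:
  assumes "finite U" "proper_col G c" "a \<noteq> b" "a \<in> {1,2,3}" "b \<in> {1,2,3}" "closedU G c a b U"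
  shows "(c, kempe_swap c a b U) \<in> {(c,d). kempe_step G c d}\<^sup>*"
  using assms
proof (induction "card U" arbitrary: c U rule: less_induct)
  case less
  show ?case
  proof (cases "U = {}")
    case True
    have "kempe_swap c a b U = c" using True by (auto simp: kempe_swap_def)
    thus ?thesis by simp
  next
    case False
    then obtain e where eU: "e \<in> U" by blast
    have e: "e \<in> edges G" "c e \<in> {a,b}" using eU less.prems(6) by (auto simp: closedU_def)
    define K where "K = {f\<in>edges G. c f \<in> {a,b} \<and> (e,f) \<in> (ab_link G c a b)\<^sup>*}"
    have kc: "kempe_chain G c a b K" unfolding kempe_chain_def using less.prems(3-5) e K_def by auto
    have KU: "K \<subseteq> U"
    proof
      fix f assume "f \<in> K"
      hence "(e,f) \<in> (ab_link G c a b)\<^sup>*" by (auto simp: K_def)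
      thus "f \<in> U"
      proof (induction rule: rtrancl_induct)
        case base thus ?case using eU .
      next
        case (step y z) thus ?case using less.prems(6) by (auto simp: closedU_def ab_link_def)
      qed
    qed
    have eK: "e \<in> K" using e by (auto simp: K_def)
    define c' where "c' = kempe_swap c a b K"
    have st: "kempe_step G c c'" unfolding kempe_step_def c'_def using kc less.prems(2) by blast
    have pc': "proper_col G c'" unfolding c'_def by (rule swap_proper[OF less.prems(2) less.prems(4) less.prems(5) chain_closed[OF kc]])
    have clUK: "closedU G c a b (U - K)"
      unfolding closedU_def
    proof (intro conjI ballI impI)
      show "U - K \<subseteq> {e \<in> edges G. c e \<in> {a, b}}" using less.prems(6) by (auto simp: closedU_def)
    next
      fix f g assume f: "f \<in> U - K" and g: "g \<in> edges G" and h: "c g \<in> {a, b} \<and> ends G f \<inter> ends G g \<noteq> {}"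
      have gU: "g \<in> U" using f g h less.prems(6) by (auto simp: closedU_def)
      have fe: "f \<in> edges G" "c f \<in> {a,b}" using f less.prems(6) by (auto simp: closedU_def)
      show "g \<in> U - K"
      proof (rule ccontr)
        assume "g \<notin> U - K"
        hence gK: "g \<in> K" using gU by blast
        have "(g,f) \<in> ab_link G c a b" using fe g h by (auto simp: ab_link_def)
        hence "(e,f) \<in> (ab_link G c a b)\<^sup>*" using gK by (auto simp: K_def)
        hence "f \<in> K" using fe by (auto simp: K_def)
        thus False using f by blast
      qed
    qed
    have cl': "closedU G c' a b (U - K)" unfolding c'_def using clUK closedU_swap by blast
    have "U - K \<subset> U" using eK eU by blast
    hence lt: "card (U - K) < card U" using less.prems(1) by (rule psubset_card_mono[rotated])
    have IH: "(c', kempe_swap c' a b (U - K)) \<in> {(c,d). kempe_step G c d}\<^sup>*"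
      using less.hyps[OF lt _ pc' less.prems(3-5) cl'] less.prems(1) by auto
    have eq: "kempe_swap c' a b (U - K) = kempe_swap c a b U"
      using KU unfolding c'_def kempe_swap_def by (auto intro!: ext)
    have "(c, c') \<in> {(c,d). kempe_step G c d}" using st by simp
    from converse_rtrancl_into_rtrancl[OF this IH] show ?thesis using eq by simp
  qed
qed

lemma step_cs: "kempe_step G c d \<Longrightarrow> (c,d) \<in> cs G"
proof -
  assume "kempe_step G c d"
  then obtain a b K where h: "proper_col G c" "kempe_chain G c a b K" "d = kempe_swap c a b K"
    by (auto simp: kempe_step_def)
  have "a \<noteq> b" "a \<in> {1,2,3}" "b \<in> {1,2,3}" using h(2) by (auto simp: kempe_chain_def)
  thus ?thesis using h chain_closed[OF h(2)] unfolding cs_def by blast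
qed

lemma cs_sym: "(c,d) \<in> cs G \<Longrightarrow> (d,c) \<in> cs G"
proof -
  assume "(c,d) \<in> cs G"
  then obtain a b U where h: "proper_col G c" "a \<noteq> b" "a \<in> {1,2,3}" "b \<in> {1,2,3}"
    "closedU G c a b U" "d = kempe_swap c a b U" by (auto simp: cs_def)
  have "proper_col G d" using h swap_proper by blast
  moreover have "closedU G d a b U" using h closedU_swap by blast
  moreover have "c = kempe_swap d a b U" using h swap_swap by metis
  ultimately show ?thesis using h unfolding cs_def by blast
qed

lemma cs_proper: "(c,d) \<in> cs G \<Longrightarrow> proper_col G d"
  by (auto simp: cs_def intro: swap_proper)

lemma cs_proper_src: "(c,d) \<in> cs G \<Longrightarrow> proper_col G c"
  by (auto simp: cs_def)

lemma csr_proper: "(c,d) \<in> (cs G)\<^sup>* \<Longrightarrow> proper_col G c \<Longrightarrow> proper_col G d"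
  by (induction rule: rtrancl_induct) (auto intro: cs_proper)

lemma cs_steps: "finite (edges G) \<Longrightarrow> (c,d) \<in> cs G \<Longrightarrow> (c,d) \<in> {(c,d). kempe_step G c d}\<^sup>*"
proof -
  assume fin: "finite (edges G)" and "(c,d) \<in> cs G"
  then obtain a b U where h: "proper_col G c" "a \<noteq> b" "a \<in> {1,2,3}" "b \<in> {1,2,3}"
    "closedU G c a b U" "d = kempe_swap c a b U" by (auto simp: cs_def)
  have "finite U" using h(5) fin by (auto simp: closedU_def intro: finite_subset)
  thus ?thesis using closed_to_steps h by blast
qed

lemma kempe_rel_cs:
  assumes fin: "finite (edges G)"
  shows "kempe_rel G = {(c,d). c \<in> colorings G \<and> (c,d) \<in> (cs G)\<^sup>*}"
proof (intro set_eqI iffI)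
  fix p assume "p \<in> kempe_rel G"
  then obtain c d where p: "p = (c,d)" and c: "c \<in> colorings G"
    and r: "(c,d) \<in> ({(c,d). kempe_step G c d} \<union> {(c,d). kempe_step G d c})\<^sup>*"
    by (auto simp: kempe_rel_def)
  have "{(c,d). kempe_step G c d} \<union> {(c,d). kempe_step G d c} \<subseteq> cs G"
    using step_cs cs_sym by blast
  hence "(c,d) \<in> (cs G)\<^sup>*" using r rtrancl_mono by blast
  thus "p \<in> {(c,d). c \<in> colorings G \<and> (c,d) \<in> (cs G)\<^sup>*}" using p c by auto
next
  fix p assume "p \<in> {(c,d). c \<in> colorings G \<and> (c,d) \<in> (cs G)\<^sup>*}"
  then obtain c d where p: "p = (c,d)" and c: "c \<in> colorings G" and r: "(c,d) \<in> (cs G)\<^sup>*" by auto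
  let ?S = "{(c,d). kempe_step G c d} \<union> {(c,d). kempe_step G d c}"
  have "cs G \<subseteq> ?S\<^sup>*"
  proof
    fix q assume "q \<in> cs G"
    then obtain x y where q: "q = (x,y)" "(x,y) \<in> cs G" by (cases q) auto
    have "(x,y) \<in> {(c,d). kempe_step G c d}\<^sup>*" using cs_steps[OF fin q(2)] .
    thus "q \<in> ?S\<^sup>*" using q rtrancl_mono[of "{(c,d). kempe_step G c d}" ?S] by blast
  qed
  hence "(c,d) \<in> ?S\<^sup>*" using r by (metis rtrancl_subset_rtrancl subsetD)
  moreover have "d \<in> colorings G" using csr_proper r c by (auto simp: colorings_def)
  ultimately show "p \<in> kempe_rel G" using p c by (auto simp: kempe_rel_def)
qed

lemma sym_cs: "sym ((cs G)\<^sup>*)"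
  by (rule sym_rtrancl) (auto simp: sym_def intro: cs_sym)

lemma kempe_equiv: "finite (edges G) \<Longrightarrow> equiv (colorings G) (kempe_rel G)"
proof -
  assume fin: "finite (edges G)"
  show ?thesis unfolding kempe_rel_cs[OF fin] equiv_def
  proof (intro conjI)
    show "{(c, d). c \<in> colorings G \<and> (c, d) \<in> (cs G)\<^sup>*} \<subseteq> colorings G \<times> colorings G"
      by (auto simp: colorings_def dest: csr_proper)
    show "refl_on (colorings G) {(c, d). c \<in> colorings G \<and> (c, d) \<in> (cs G)\<^sup>*}"
      by (auto simp: refl_on_def colorings_def dest: csr_proper)
    show "sym {(c, d). c \<in> colorings G \<and> (c, d) \<in> (cs G)\<^sup>*}"
      using sym_cs[of G] unfolding sym_def colorings_def
      by (auto intro: csr_proper)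
    show "trans {(c, d). c \<in> colorings G \<and> (c, d) \<in> (cs G)\<^sup>*}"
      by (auto simp: trans_def)
  qed
qed

lemma tr_cs:
  assumes p: "proper_col G c" and ab: "a \<noteq> b" "a \<in> {1,2,3}" "b \<in> {1,2,3}"
  shows "(c, tr a b \<circ> c) \<in> cs G"
proof -
  let ?U = "{f\<in>edges G. c f \<in> {a,b}}"
  have "closedU G c a b ?U" by (auto simp: closedU_def)
  moreover have "tr a b \<circ> c = kempe_swap c a b ?U"
  proof
    fix f show "(tr a b \<circ> c) f = kempe_swap c a b ?U f"
      using p ab by (cases "f \<in> edges G") (auto simp: kempe_swap_def tr_def proper_col_def)
  qed
  ultimately show ?thesis using p ab unfolding cs_def by blast
qed

lemma restr_swap: "restr E (kempe_swap c a b U) = kempe_swap (restr E c) a b (U \<inter> E)"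
  by (auto intro!: ext simp: restr_def kempe_swap_def)

lemma restr_swap_empty: "U \<inter> E = {} \<Longrightarrow> restr E (kempe_swap c a b U) = restr E c"
  by (auto intro!: ext simp: restr_def kempe_swap_def)

lemma restr_swap_all: "a \<noteq> 0 \<Longrightarrow> b \<noteq> 0 \<Longrightarrow> U \<inter> E = {f\<in>E. c f \<in> {a,b}} \<Longrightarrow>
   restr E (kempe_swap c a b U) = tr a b \<circ> restr E c"
  by (auto intro!: ext simp: restr_def kempe_swap_def tr_def)



lemma vertex_color:
  assumes cub: "cubic G" and p: "proper_col G c" and v: "v \<in> verts G" and k: "k \<in> {1,2,3}"
  shows "card {e\<in>edges G. v \<in> ends G e \<and> c e = k} = 1"
proof -
  let ?I = "{e\<in>edges G. v \<in> ends G e}"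
  have fin: "finite ?I" using cub by (auto simp: cubic_def wf_graph_def)
  have c3: "card ?I = 3" using cub v by (auto simp: cubic_def degree_def)
  have inj: "inj_on c ?I"
  proof (rule inj_onI)
    fix e f assume e: "e \<in> ?I" and f: "f \<in> ?I" and ce: "c e = c f"
    show "e = f"
    proof (rule ccontr)
      assume "e \<noteq> f"
      moreover have "ends G e \<inter> ends G f \<noteq> {}" using e f by auto
      ultimately have "c e \<noteq> c f" using p e f unfolding proper_col_def by auto
      thus False using ce by simp
    qed
  qed
  have sub: "c ` ?I \<subseteq> {1,2,3}" using p by (auto simp: proper_col_def)
  have "card (c ` ?I) = 3" using card_image[OF inj] c3 by simp
  hence img: "c ` ?I = {1,2,3}" using card_subset_eq[OF _ sub] by force
  have "k \<in> c ` ?I" using k img by simp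
  then obtain e where e: "e \<in> ?I" "c e = k" by blast
  have "{e\<in>edges G. v \<in> ends G e \<and> c e = k} = {e}"
  proof (intro set_eqI iffI)
    fix f assume "f \<in> {e\<in>edges G. v \<in> ends G e \<and> c e = k}"
    hence "f \<in> ?I" "c f = c e" using e by auto
    thus "f \<in> {e}" using inj e(1) by (auto dest: inj_onD)
  qed (use e in auto)
  thus ?thesis by simp
qed

lemma card_filter_sum: "finite A \<Longrightarrow> card {x\<in>A. P x} = (\<Sum>x\<in>A. if P x then 1 else 0)"
  by (simp add: sum.inter_filter[symmetric])

lemma parity:
  assumes cub: "cubic G" and p: "proper_col G c" and S: "S1 \<union> S2 = verts G" "S1 \<inter> S2 = {}"
    and k: "k \<in> {1,2,3}"
  shows "card {e\<in>crossing G S1 S2. c e = k} mod 2 = card S1 mod 2"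
proof -
  define F where "F = {e\<in>edges G. c e = k}"
  have finV: "finite (verts G)" and finE: "finite (edges G)" using cub by (auto simp: cubic_def wf_graph_def)
  have finS: "finite S1" using S finV by (metis finite_Un)
  have finF: "finite F" using finE by (simp add: F_def)
  have "(\<Sum>v\<in>S1. card {e\<in>edges G. v \<in> ends G e \<and> c e = k}) = (\<Sum>v\<in>S1. 1)"
    using vertex_color[OF cub p _ k] S by (intro sum.cong) auto
  hence "card S1 = (\<Sum>v\<in>S1. card {e\<in>edges G. v \<in> ends G e \<and> c e = k})" by simp
  also have "\<dots> = (\<Sum>v\<in>S1. \<Sum>e\<in>F. if v \<in> ends G e then 1 else 0)"
  proof (rule sum.cong[OF refl])
    fix v assume "v \<in> S1"
    have "{e\<in>edges G. v \<in> ends G e \<and> c e = k} = {e\<in>F. v \<in> ends G e}" by (auto simp: F_def)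
    thus "card {e\<in>edges G. v \<in> ends G e \<and> c e = k} = (\<Sum>e\<in>F. if v \<in> ends G e then 1 else 0)"
      using card_filter_sum[OF finF] by simp
  qed
  also have "\<dots> = (\<Sum>e\<in>F. \<Sum>v\<in>S1. if v \<in> ends G e then 1 else 0)" by (rule sum.swap)
  also have "\<dots> = (\<Sum>e\<in>F. card (ends G e \<inter> S1))"
  proof (rule sum.cong[OF refl])
    fix e assume "e \<in> F"
    have "ends G e \<inter> S1 = {v\<in>S1. v \<in> ends G e}" by auto
    thus "(\<Sum>v\<in>S1. if v \<in> ends G e then 1 else 0) = card (ends G e \<inter> S1)"
      using card_filter_sum[OF finS] by simp
  qed
  finally have eq: "card S1 = (\<Sum>e\<in>F. card (ends G e \<inter> S1))" .
  have per: "card (ends G e \<inter> S1) mod 2 = (if e \<in> crossing G S1 S2 then 1 else 0)" if eF: "e \<in> F" for e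
  proof -
    have eE: "e \<in> edges G" using eF by (simp add: F_def)
    have "ends G e \<subseteq> verts G" "card (ends G e) = 2" using cub eE by (auto simp: cubic_def wf_graph_def)
    then obtain x y where xy: "ends G e = {x,y}" "x \<noteq> y" "x \<in> verts G" "y \<in> verts G"
      by (metis card_2_iff insert_subset)
    show ?thesis
      using xy S eE unfolding crossing_def
      by (cases "x \<in> S1"; cases "y \<in> S1") (auto simp: Int_insert_left)
  qed
  have "card S1 mod 2 = (\<Sum>e\<in>F. card (ends G e \<inter> S1) mod 2) mod 2" using eq by (simp add: mod_sum_eq)
  also have "(\<Sum>e\<in>F. card (ends G e \<inter> S1) mod 2) = (\<Sum>e\<in>F. if e \<in> crossing G S1 S2 then 1 else 0)"
    using per by (rule sum.cong[OF refl])
  also have "\<dots> = card {e\<in>F. e \<in> crossing G S1 S2}" using card_filter_sum[OF finF] by simp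
  also have "{e\<in>F. e \<in> crossing G S1 S2} = {e\<in>crossing G S1 S2. c e = k}"
    by (auto simp: F_def crossing_def)
  finally show ?thesis by simp
qed

definition ind :: "nat \<Rightarrow> nat \<Rightarrow> nat" where "ind x k = (if x = k then 1 else 0)"

lemma arith3:
  fixes x y z :: nat
  assumes "x \<in> {1,2,3}" "y \<in> {1,2,3}" "z \<in> {1,2,3}"
    and "\<forall>k\<in>{1,2,3}. (ind x k + ind y k + ind z k) mod 2 = m"
  shows "x \<noteq> y \<and> x \<noteq> z \<and> y \<noteq> z"
  using assms by (auto simp: ind_def)

lemma arith2:
  fixes x y :: nat
  assumes "x \<in> {1,2,3}" "y \<in> {1,2,3}"
    and "\<forall>k\<in>{1,2,3}. (ind x k + ind y k) mod 2 = m"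
  shows "x = y"
  using assms by (auto simp: ind_def)

lemma cut3_colors:
  assumes cub: "cubic G" and p: "proper_col G c" and S: "S1 \<union> S2 = verts G" "S1 \<inter> S2 = {}"
    and d: "distinct [e1,e2,e3]" and cr: "crossing G S1 S2 = {e1,e2,e3}"
  shows "c e1 \<noteq> c e2 \<and> c e1 \<noteq> c e3 \<and> c e2 \<noteq> c e3"
proof -
  have E: "{e1,e2,e3} \<subseteq> edges G" using cr unfolding crossing_def by blast
  have col: "c e1 \<in> {1,2,3}" "c e2 \<in> {1,2,3}" "c e3 \<in> {1,2,3}" using p E by (auto simp: proper_col_def)
  have "\<forall>k\<in>{1,2,3}. (ind (c e1) k + ind (c e2) k + ind (c e3) k) mod 2 = card S1 mod 2"
  proof
    fix k :: nat assume k: "k \<in> {1,2,3}"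
    have "card {e\<in>crossing G S1 S2. c e = k} = (\<Sum>e\<in>{e1,e2,e3}. if c e = k then 1 else 0)"
      using card_filter_sum[of "{e1,e2,e3}"] cr by simp
    also have "\<dots> = ind (c e1) k + ind (c e2) k + ind (c e3) k" using d by (simp add: ind_def)
    finally show "(ind (c e1) k + ind (c e2) k + ind (c e3) k) mod 2 = card S1 mod 2"
      using parity[OF cub p S k] by simp
  qed
  thus ?thesis using arith3 col by blast
qed

lemma cut2_colors:
  assumes cub: "cubic G" and p: "proper_col G c" and S: "S1 \<union> S2 = verts G" "S1 \<inter> S2 = {}"
    and d: "e1 \<noteq> e2" and cr: "crossing G S1 S2 = {e1,e2}"
  shows "c e1 = c e2"
proof -
  have E: "{e1,e2} \<subseteq> edges G" using cr unfolding crossing_def by blast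
  have col: "c e1 \<in> {1,2,3}" "c e2 \<in> {1,2,3}" using p E by (auto simp: proper_col_def)
  have "\<forall>k\<in>{1,2,3}. (ind (c e1) k + ind (c e2) k) mod 2 = card S1 mod 2"
  proof
    fix k :: nat assume k: "k \<in> {1,2,3}"
    have "card {e\<in>crossing G S1 S2. c e = k} = (\<Sum>e\<in>{e1,e2}. if c e = k then 1 else 0)"
      using card_filter_sum[of "{e1,e2}"] cr by simp
    also have "\<dots> = ind (c e1) k + ind (c e2) k" using d by (simp add: ind_def)
    finally show "(ind (c e1) k + ind (c e2) k) mod 2 = card S1 mod 2"
      using parity[OF cub p S k] by simp
  qed
  thus ?thesis using arith2 col by blast
qed



definition perm3 :: "(nat \<Rightarrow> nat) \<Rightarrow> bool" where
  "perm3 \<pi> \<longleftrightarrow> \<pi> 0 = 0 \<and> inj_on \<pi> {1,2,3} \<and> \<pi> ` {1,2,3} \<subseteq> {1,2,3}"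

lemma perm3_id: "perm3 id" by (simp add: perm3_def)

lemma tr_inj: "tr a b x = tr a b y \<longleftrightarrow> x = y"
  unfolding tr_def by (cases "x = a"; cases "x = b"; cases "y = a"; cases "y = b") auto

lemma tr_mem: "x \<in> {1,2,3} \<Longrightarrow> a \<in> {1,2,3} \<Longrightarrow> b \<in> {1,2,3} \<Longrightarrow> tr a b x \<in> {1,2,3::nat}"
  unfolding tr_def by auto

lemma perm3_tr: "perm3 \<pi> \<Longrightarrow> a \<in> {1,2,3} \<Longrightarrow> b \<in> {1,2,3} \<Longrightarrow> perm3 (tr a b \<circ> \<pi>)"
  unfolding perm3_def
proof (intro conjI)
  assume h: "\<pi> 0 = 0 \<and> inj_on \<pi> {1, 2, 3} \<and> \<pi> ` {1, 2, 3} \<subseteq> {1, 2, 3}" and ab: "a \<in> {1,2,3}" "b \<in> {1,2,3}"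
  show "(tr a b \<circ> \<pi>) 0 = 0" using h ab by (auto simp: tr_def)
  show "inj_on (tr a b \<circ> \<pi>) {1, 2, 3}" using h unfolding inj_on_def by (simp add: tr_inj)
  show "(tr a b \<circ> \<pi>) ` {1, 2, 3} \<subseteq> {1, 2, 3}" using h ab tr_mem by (auto simp del: insert_iff)
qed

lemma cs_kr: "finite (edges G) \<Longrightarrow> (c,d) \<in> cs G \<Longrightarrow> (c,d) \<in> kempe_rel G"
  unfolding kempe_rel_cs by (auto simp: colorings_def cs_def)

lemma csr_kr: "finite (edges G) \<Longrightarrow> proper_col G c \<Longrightarrow> (c,d) \<in> (cs G)\<^sup>* \<Longrightarrow> (c,d) \<in> kempe_rel G"
  unfolding kempe_rel_cs by (auto simp: colorings_def)

lemma kr_csr: "finite (edges G) \<Longrightarrow> (c,d) \<in> kempe_rel G \<Longrightarrow> (c,d) \<in> (cs G)\<^sup>* \<and> proper_col G c \<and> proper_col G d"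
  unfolding kempe_rel_cs by (auto simp: colorings_def dest: csr_proper)

lemma kr_trans: "finite (edges G) \<Longrightarrow> (c,d) \<in> kempe_rel G \<Longrightarrow> (d,e) \<in> kempe_rel G \<Longrightarrow> (c,e) \<in> kempe_rel G"
  using kempe_equiv unfolding equiv_def trans_def by blast

lemma kr_sym: "finite (edges G) \<Longrightarrow> (c,d) \<in> kempe_rel G \<Longrightarrow> (d,c) \<in> kempe_rel G"
  using kempe_equiv unfolding equiv_def sym_def by blast

lemma kr_refl: "finite (edges G) \<Longrightarrow> proper_col G c \<Longrightarrow> (c,c) \<in> kempe_rel G"
  unfolding kempe_rel_cs by (auto simp: colorings_def)

locale glue =
  fixes G G1 G2 :: mgraph and E1 E2 :: "nat set"
  assumes fin: "finite (edges G)" "finite (edges G1)" "finite (edges G2)"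
  and r_col1: "proper_col G c \<Longrightarrow> proper_col G1 (restr E1 c)"
  and r_col2: "proper_col G c \<Longrightarrow> proper_col G2 (restr E2 c)"
  and r_cl1: "proper_col G c \<Longrightarrow> a \<in> {1,2,3} \<Longrightarrow> b \<in> {1,2,3} \<Longrightarrow> a \<noteq> b \<Longrightarrow>
     closedU G c a b U \<Longrightarrow> closedU G1 (restr E1 c) a b (U \<inter> E1)"
  and r_cl2: "proper_col G c \<Longrightarrow> a \<in> {1,2,3} \<Longrightarrow> b \<in> {1,2,3} \<Longrightarrow> a \<noteq> b \<Longrightarrow>
     closedU G c a b U \<Longrightarrow> closedU G2 (restr E2 c) a b (U \<inter> E2)"
  and lift1: "proper_col G c \<Longrightarrow> a \<in> {1,2,3} \<Longrightarrow> b \<in> {1,2,3} \<Longrightarrow> a \<noteq> b \<Longrightarrow>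
     closedU G1 (restr E1 c) a b U1 \<Longrightarrow>
     \<exists>U. closedU G c a b U \<and> U \<inter> E1 = U1 \<and> (U \<inter> E2 = {} \<or> U \<inter> E2 = {f\<in>E2. c f \<in> {a,b}})"
  and lift2: "proper_col G c \<Longrightarrow> a \<in> {1,2,3} \<Longrightarrow> b \<in> {1,2,3} \<Longrightarrow> a \<noteq> b \<Longrightarrow>
     closedU G2 (restr E2 c) a b U2 \<Longrightarrow>
     \<exists>U. closedU G c a b U \<and> U \<inter> E2 = U2 \<and> (U \<inter> E1 = {} \<or> U \<inter> E1 = {f\<in>E1. c f \<in> {a,b}})"
  and fix2: "proper_col G e \<Longrightarrow> proper_col G c \<Longrightarrow> restr E2 e = restr E2 c \<Longrightarrow> perm3 \<pi> \<Longrightarrow>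
     restr E1 e = \<pi> \<circ> restr E1 c \<Longrightarrow> (e,c) \<in> kempe_rel G"
  and surj: "c1 \<in> colorings G1 \<Longrightarrow> c2 \<in> colorings G2 \<Longrightarrow>
     \<exists>c\<in>colorings G. (restr E1 c, c1) \<in> kempe_rel G1 \<and> (restr E2 c, c2) \<in> kempe_rel G2"
begin

lemma A1_gen:
  assumes rc: "\<And>c. proper_col G c \<Longrightarrow> proper_col H (restr E c)"
    and rcl: "\<And>c a b U. proper_col G c \<Longrightarrow> a \<in> {1,2,3} \<Longrightarrow> b \<in> {1,2,3} \<Longrightarrow> a \<noteq> b \<Longrightarrow>
     closedU G c a b U \<Longrightarrow> closedU H (restr E c) a b (U \<inter> E)"
    and finH: "finite (edges H)"
    and cd: "(c,d) \<in> kempe_rel G"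
  shows "(restr E c, restr E d) \<in> kempe_rel H"
proof -
  have h: "(c,d) \<in> (cs G)\<^sup>*" "proper_col G c" using kr_csr[OF fin(1) cd] by auto
  have "(restr E c, restr E d) \<in> (cs H)\<^sup>*" using h(1)
  proof (induction rule: rtrancl_induct)
    case base thus ?case by simp
  next
    case (step y z)
    have py: "proper_col G y" using csr_proper[OF step.hyps(1) h(2)] .
    obtain a b U where s: "a \<noteq> b" "a \<in> {1,2,3}" "b \<in> {1,2,3}" "closedU G y a b U" "z = kempe_swap y a b U"
      using step.hyps(2) by (auto simp: cs_def)
    have "(restr E y, restr E z) \<in> cs H"
      unfolding cs_def using rc[OF py] rcl[OF py s(2) s(3) s(1) s(4)] s restr_swap by blast
    thus ?case using step.IH by simp
  qed
  thus ?thesis using csr_kr[OF finH rc[OF h(2)]] by blast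
qed

lemma A1_1: "(c,d) \<in> kempe_rel G \<Longrightarrow> (restr E1 c, restr E1 d) \<in> kempe_rel G1"
  by (rule A1_gen[OF r_col1 r_cl1 fin(2)])

lemma A1_2: "(c,d) \<in> kempe_rel G \<Longrightarrow> (restr E2 c, restr E2 d) \<in> kempe_rel G2"
  by (rule A1_gen[OF r_col2 r_cl2 fin(3)])

lemma path1:
  assumes "(x,y) \<in> (cs G1)\<^sup>*" "proper_col G c" "restr E1 c = x"
  shows "\<exists>d. (c,d) \<in> kempe_rel G \<and> restr E1 d = y"
  using assms(1)
proof (induction rule: rtrancl_induct)
  case base thus ?case using kr_refl[OF fin(1) assms(2)] assms(3) by blast
next
  case (step y z)
  then obtain d where d: "(c,d) \<in> kempe_rel G" "restr E1 d = y" by blast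
  have pd: "proper_col G d" using kr_csr[OF fin(1) d(1)] by blast
  obtain a b U1 where s: "a \<noteq> b" "a \<in> {1,2,3}" "b \<in> {1,2,3}" "closedU G1 y a b U1" "z = kempe_swap y a b U1"
    using step.hyps(2) by (auto simp: cs_def)
  obtain U where U: "closedU G d a b U" "U \<inter> E1 = U1"
    using lift1[OF pd s(2) s(3) s(1)] s(4) d(2) by blast
  have "(d, kempe_swap d a b U) \<in> cs G" unfolding cs_def using pd s U by blast
  hence "(c, kempe_swap d a b U) \<in> kempe_rel G" using kr_trans[OF fin(1) d(1) cs_kr[OF fin(1)]] by blast
  moreover have "restr E1 (kempe_swap d a b U) = z" using restr_swap U d s by simp
  ultimately show ?case by blast
qed

lemma path2:
  assumes "(x,y) \<in> (cs G2)\<^sup>*" "proper_col G c'" "restr E2 c' = y"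
  shows "\<And>e \<pi>. proper_col G e \<Longrightarrow> restr E2 e = x \<Longrightarrow> perm3 \<pi> \<Longrightarrow> restr E1 e = \<pi> \<circ> restr E1 c'
     \<Longrightarrow> (e,c') \<in> kempe_rel G"
  using assms(1)
proof (induction rule: converse_rtrancl_induct)
  case base
  thus ?case using fix2[OF base(1) assms(2) _ base(3) base(4)] base(2) assms(3) by simp
next
  case (step x x')
  obtain a b U2 where s: "a \<noteq> b" "a \<in> {1,2,3}" "b \<in> {1,2,3}" "closedU G2 x a b U2" "x' = kempe_swap x a b U2"
    using step.hyps(1) by (auto simp: cs_def)
  obtain U where U: "closedU G e a b U" "U \<inter> E2 = U2" "U \<inter> E1 = {} \<or> U \<inter> E1 = {f\<in>E1. e f \<in> {a,b}}"
    using lift2[OF step.prems(1) s(2) s(3) s(1)] s(4) step.prems(2) by blast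
  define e' where "e' = kempe_swap e a b U"
  have ee': "(e,e') \<in> cs G" unfolding cs_def e'_def using step.prems(1) s U by blast
  have pe': "proper_col G e'" using cs_proper[OF ee'] .
  have r2: "restr E2 e' = x'" unfolding e'_def using restr_swap U s step.prems(2) by simp
  have a0: "a \<noteq> 0" "b \<noteq> 0" using s by auto
  have "\<exists>\<pi>'. perm3 \<pi>' \<and> restr E1 e' = \<pi>' \<circ> restr E1 c'"
    using U(3)
  proof
    assume "U \<inter> E1 = {}"
    thus ?thesis using restr_swap_empty step.prems(3,4) unfolding e'_def by metis
  next
    assume "U \<inter> E1 = {f\<in>E1. e f \<in> {a,b}}"
    hence "restr E1 e' = tr a b \<circ> restr E1 e" unfolding e'_def using restr_swap_all[OF a0] by blast
    hence "restr E1 e' = (tr a b \<circ> \<pi>) \<circ> restr E1 c'" using step.prems(4) by (simp add: comp_def)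
    thus ?thesis using perm3_tr[OF step.prems(3) s(2) s(3)] by blast
  qed
  then obtain \<pi>' where "perm3 \<pi>'" "restr E1 e' = \<pi>' \<circ> restr E1 c'" by blast
  hence "(e',c') \<in> kempe_rel G" using step.IH pe' r2 by blast
  thus ?case using kr_trans[OF fin(1) cs_kr[OF fin(1) ee']] by blast
qed

lemma A2:
  assumes c: "c \<in> colorings G" and c': "c' \<in> colorings G"
    and r1: "(restr E1 c, restr E1 c') \<in> kempe_rel G1" and r2: "(restr E2 c, restr E2 c') \<in> kempe_rel G2"
  shows "(c,c') \<in> kempe_rel G"
proof -
  have pc: "proper_col G c" "proper_col G c'" using c c' by (auto simp: colorings_def)
  obtain d where d: "(c,d) \<in> kempe_rel G" "restr E1 d = restr E1 c'"
    using path1[OF _ pc(1) refl] kr_csr[OF fin(2) r1] by blast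
  have pd: "proper_col G d" using kr_csr[OF fin(1) d(1)] by blast
  have "(restr E2 d, restr E2 c') \<in> kempe_rel G2"
    using kr_trans[OF fin(3) kr_sym[OF fin(3) A1_2[OF d(1)]] r2] .
  hence "(restr E2 d, restr E2 c') \<in> (cs G2)\<^sup>*" using kr_csr[OF fin(3)] by blast
  hence "(d,c') \<in> kempe_rel G" using path2[OF _ pc(2) refl pd refl perm3_id] d(2) by simp
  thus ?thesis using kr_trans[OF fin(1) d(1)] by blast
qed

theorem glue_card: "Kp G = Kp G1 * Kp G2"
proof -
  let ?C = "colorings G" and ?R = "kempe_rel G"
  let ?C1 = "colorings G1" and ?R1 = "kempe_rel G1"
  let ?C2 = "colorings G2" and ?R2 = "kempe_rel G2"
  have eq: "equiv ?C ?R" "equiv ?C1 ?R1" "equiv ?C2 ?R2" using kempe_equiv fin by auto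
  define \<Phi> where "\<Phi> X = (?R1 `` (restr E1 ` X), ?R2 `` (restr E2 ` X))" for X
  have col1: "restr E1 c \<in> ?C1" if "c \<in> ?C" for c using r_col1 that by (auto simp: colorings_def)
  have col2: "restr E2 c \<in> ?C2" if "c \<in> ?C" for c using r_col2 that by (auto simp: colorings_def)
  have Phi: "\<Phi> (?R `` {c}) = (?R1 `` {restr E1 c}, ?R2 `` {restr E2 c})" if c: "c \<in> ?C" for c
  proof -
    have "?R1 `` (restr E1 ` (?R `` {c})) = ?R1 `` {restr E1 c}"
    proof
      show "?R1 `` (restr E1 ` (?R `` {c})) \<subseteq> ?R1 `` {restr E1 c}"
        using A1_1 kr_trans[OF fin(2)] by blast
      have "(c,c) \<in> ?R" using eq(1) c by (simp add: equiv_def refl_on_def)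
      thus "?R1 `` {restr E1 c} \<subseteq> ?R1 `` (restr E1 ` (?R `` {c}))" by blast
    qed
    moreover have "?R2 `` (restr E2 ` (?R `` {c})) = ?R2 `` {restr E2 c}"
    proof
      show "?R2 `` (restr E2 ` (?R `` {c})) \<subseteq> ?R2 `` {restr E2 c}"
        using A1_2 kr_trans[OF fin(3)] by blast
      have "(c,c) \<in> ?R" using eq(1) c by (simp add: equiv_def refl_on_def)
      thus "?R2 `` {restr E2 c} \<subseteq> ?R2 `` (restr E2 ` (?R `` {c}))" by blast
    qed
    ultimately show ?thesis unfolding \<Phi>_def by simp
  qed
  have bij: "bij_betw \<Phi> (?C // ?R) (?C1 // ?R1 \<times> ?C2 // ?R2)"
  proof (rule bij_betw_imageI)
    show "inj_on \<Phi> (?C // ?R)"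
    proof (rule inj_onI)
      fix X Y assume X: "X \<in> ?C // ?R" and Y: "Y \<in> ?C // ?R" and XY: "\<Phi> X = \<Phi> Y"
      obtain c where c: "c \<in> ?C" "X = ?R `` {c}" using X by (auto elim: quotientE)
      obtain d where d: "d \<in> ?C" "Y = ?R `` {d}" using Y by (auto elim: quotientE)
      have "?R1 `` {restr E1 c} = ?R1 `` {restr E1 d}" "?R2 `` {restr E2 c} = ?R2 `` {restr E2 d}"
        using XY Phi c d by auto
      hence "(restr E1 c, restr E1 d) \<in> ?R1" "(restr E2 c, restr E2 d) \<in> ?R2"
        using eq_equiv_class_iff[OF eq(2) col1[OF c(1)] col1[OF d(1)]]
          eq_equiv_class_iff[OF eq(3) col2[OF c(1)] col2[OF d(1)]] by auto
      hence "(c,d) \<in> ?R" using A2 c d by blast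
      thus "X = Y" using c d equiv_class_eq[OF eq(1)] by simp
    qed
  next
    show "\<Phi> ` (?C // ?R) = ?C1 // ?R1 \<times> ?C2 // ?R2"
    proof
      show "\<Phi> ` (?C // ?R) \<subseteq> ?C1 // ?R1 \<times> ?C2 // ?R2"
      proof
        fix Z assume "Z \<in> \<Phi> ` (?C // ?R)"
        then obtain c where c: "c \<in> ?C" "Z = \<Phi> (?R `` {c})" by (auto elim: quotientE)
        thus "Z \<in> ?C1 // ?R1 \<times> ?C2 // ?R2" using Phi[OF c(1)] col1 col2 by (auto intro: quotientI)
      qed
    next
      show "?C1 // ?R1 \<times> ?C2 // ?R2 \<subseteq> \<Phi> ` (?C // ?R)"
      proof
        fix Z assume "Z \<in> ?C1 // ?R1 \<times> ?C2 // ?R2"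
        then obtain c1 c2 where z: "c1 \<in> ?C1" "c2 \<in> ?C2" "Z = (?R1 `` {c1}, ?R2 `` {c2})"
          by (auto elim!: quotientE)
        obtain c where c: "c \<in> ?C" "(restr E1 c, c1) \<in> ?R1" "(restr E2 c, c2) \<in> ?R2"
          using surj[OF z(1) z(2)] by blast
        have "Z = \<Phi> (?R `` {c})" using Phi[OF c(1)] z(3) equiv_class_eq[OF eq(2) c(2)]
          equiv_class_eq[OF eq(3) c(3)] by simp
        thus "Z \<in> \<Phi> ` (?C // ?R)" using c(1) by (auto intro: quotientI)
      qed
    qed
  qed
  have "Kp G = card (?C1 // ?R1 \<times> ?C2 // ?R2)" unfolding Kp_def using bij_betw_same_card[OF bij] .
  thus ?thesis by (simp add: Kp_def card_cartesian_product)
qed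

end



locale s3 =
  fixes G G1 G2 :: mgraph and S1 S2 :: "nat set" and e1 e2 e3 x1 x2 x3 y1 y2 y3 v1 v2 :: nat
  assumes cub: "cubic G"
  and part: "S1 \<union> S2 = verts G" "S1 \<inter> S2 = {}"
  and dist: "distinct [e1,e2,e3]" and cross: "crossing G S1 S2 = {e1,e2,e3}"
  and en: "ends G e1 = {x1,y1}" "ends G e2 = {x2,y2}" "ends G e3 = {x3,y3}"
  and xs: "x1 \<in> S1" "x2 \<in> S1" "x3 \<in> S1" and ys: "y1 \<in> S2" "y2 \<in> S2" "y3 \<in> S2"
  and vs: "v1 \<notin> verts G" "v2 \<notin> verts G"
  and G1: "G1 = \<lparr>verts = S1 \<union> {v1}, edges = inside G S1 \<union> {e1,e2,e3},
             ends = (ends G)(e1 := {x1,v1}, e2 := {x2,v1}, e3 := {x3,v1})\<rparr>"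
  and G2: "G2 = \<lparr>verts = S2 \<union> {v2}, edges = inside G S2 \<union> {e1,e2,e3},
             ends = (ends G)(e1 := {y1,v2}, e2 := {y2,v2}, e3 := {y3,v2})\<rparr>"
begin

lemma sym: "s3 G G2 G1 S2 S1 e1 e2 e3 y1 y2 y3 x1 x2 x3 v2 v1"
proof -
  have "crossing G S2 S1 = crossing G S1 S2" unfolding crossing_def by blast
  thus ?thesis using cub part dist cross en xs ys vs G1 G2
    by unfold_locales (auto simp: insert_commute)
qed

lemma wf: "finite (verts G)" "finite (edges G)"
  "\<And>e. e \<in> edges G \<Longrightarrow> ends G e \<subseteq> verts G" "\<And>e. e \<in> edges G \<Longrightarrow> card (ends G e) = 2"
  using cub by (auto simp: cubic_def wf_graph_def)

lemma ends_ne: "e \<in> edges G \<Longrightarrow> ends G e \<noteq> {}"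
  using wf(4) by fastforce

lemma E1: "edges G1 = inside G S1 \<union> {e1,e2,e3}" using G1 by simp

lemma cut_edges: "{e1,e2,e3} \<subseteq> edges G" using cross unfolding crossing_def by blast

lemma cut_not_in1: "f \<in> {e1,e2,e3} \<Longrightarrow> f \<notin> inside G S1"
  using en ys part(2) unfolding inside_def by auto

lemma cut_not_in2: "f \<in> {e1,e2,e3} \<Longrightarrow> f \<notin> inside G S2"
  using en xs part(2) unfolding inside_def by auto

lemma S1V: "S1 \<subseteq> verts G" "v1 \<notin> S1" using part vs by auto

lemma edge_cases: "f \<in> edges G \<Longrightarrow> f \<in> inside G S1 \<or> f \<in> inside G S2 \<or> f \<in> {e1,e2,e3}"
proof -
  assume f: "f \<in> edges G"
  have "ends G f \<subseteq> S1 \<union> S2" using wf(3)[OF f] part by simp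
  moreover have "f \<notin> crossing G S1 S2 \<Longrightarrow> ends G f \<inter> S1 = {} \<or> ends G f \<inter> S2 = {}"
    using f unfolding crossing_def by blast
  ultimately show ?thesis using f cross unfolding inside_def by blast
qed

lemma ins_disj: "f \<in> inside G S1 \<Longrightarrow> f \<notin> inside G S2"
  using ends_ne part(2) unfolding inside_def by blast

lemma in2_not_E1: "f \<in> inside G S2 \<Longrightarrow> f \<notin> edges G1"
  using E1 cut_not_in2 ins_disj by blast

lemma ends_G1: "ends G1 = (ends G)(e1 := {x1,v1}, e2 := {x2,v1}, e3 := {x3,v1})"
  using G1 by simp

lemma ends1: "f \<in> edges G1 \<Longrightarrow> ends G1 f = (ends G f \<inter> S1) \<union> (if f \<in> {e1,e2,e3} then {v1} else {})"
proof -
  assume f: "f \<in> edges G1"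
  show ?thesis
  proof (cases "f \<in> {e1,e2,e3}")
    case True
    then show ?thesis using dist en xs ys part(2) S1V unfolding ends_G1 by auto
  next
    case False
    hence "f \<in> inside G S1" using f E1 by blast
    thus ?thesis using False unfolding ends_G1 inside_def by auto
  qed
qed

lemma E1_sub: "edges G1 \<subseteq> edges G" using E1 cut_edges unfolding inside_def by blast

lemma adj1: "f \<in> edges G1 \<Longrightarrow> g \<in> edges G1 \<Longrightarrow>
   (ends G1 f \<inter> ends G1 g \<noteq> {}) = (ends G f \<inter> ends G g \<inter> S1 \<noteq> {} \<or> (f \<in> {e1,e2,e3} \<and> g \<in> {e1,e2,e3}))"
  using ends1[of f] ends1[of g] S1V(2) by (auto split: if_splits)

lemma S1_in_E1: "f \<in> edges G \<Longrightarrow> w \<in> ends G f \<Longrightarrow> w \<in> S1 \<Longrightarrow> f \<in> edges G1"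
  using edge_cases[of f] part(2) E1 unfolding inside_def by blast

lemma S2_cut: "f \<in> edges G1 \<Longrightarrow> w \<in> ends G f \<Longrightarrow> w \<in> S2 \<Longrightarrow> f \<in> {e1,e2,e3}"
  using E1 part(2) unfolding inside_def by blast

lemma E12: "f \<in> edges G1 \<Longrightarrow> f \<in> edges G2 \<Longrightarrow> f \<in> {e1,e2,e3}"
  using E1 G2 ins_disj by auto

lemma cutcol: "proper_col G c \<Longrightarrow> c e1 \<noteq> c e2 \<and> c e1 \<noteq> c e3 \<and> c e2 \<noteq> c e3"
  using cut3_colors[OF cub _ part dist cross] by blast

lemma cutcol': "proper_col G c \<Longrightarrow> f \<in> {e1,e2,e3} \<Longrightarrow> g \<in> {e1,e2,e3} \<Longrightarrow> f \<noteq> g \<Longrightarrow> c f \<noteq> c g"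
  using cutcol[of c] by auto

lemma r_col: "proper_col G c \<Longrightarrow> proper_col G1 (restr (edges G1) c)"
proof -
  assume p: "proper_col G c"
  show ?thesis unfolding proper_col_def
  proof (intro conjI allI impI ballI)
    fix e assume "e \<notin> edges G1" thus "restr (edges G1) c e = 0" by (simp add: restr_def)
  next
    fix e assume "e \<in> edges G1" thus "restr (edges G1) c e \<in> {1,2,3}"
      using p E1_sub by (auto simp: restr_def proper_col_def)
  next
    fix e f assume e: "e \<in> edges G1" and f: "f \<in> edges G1" and h: "e \<noteq> f \<and> ends G1 e \<inter> ends G1 f \<noteq> {}"
    have "ends G e \<inter> ends G f \<noteq> {} \<or> (e \<in> {e1,e2,e3} \<and> f \<in> {e1,e2,e3})" using adj1[OF e f] h by blast
    hence "c e \<noteq> c f"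
    proof
      assume "ends G e \<inter> ends G f \<noteq> {}"
      thus ?thesis using p h e f E1_sub unfolding proper_col_def by blast
    next
      assume "e \<in> {e1,e2,e3} \<and> f \<in> {e1,e2,e3}"
      thus ?thesis using cutcol'[OF p] h by blast
    qed
    thus "restr (edges G1) c e \<noteq> restr (edges G1) c f" using e f by (simp add: restr_def)
  qed
qed

lemma cut_closure:
  assumes p: "proper_col G c" and ab: "a \<in> {1,2,3}" "b \<in> {1,2,3}" and cl: "closedU G c a b U"
    and f: "f \<in> U" "f \<in> {e1,e2,e3}" and g: "g \<in> {e1,e2,e3}" "c g \<in> {a,b}"
  shows "g \<in> U"
proof (rule ccontr)
  assume gU: "g \<notin> U"
  have fg: "f \<noteq> g" using f gU by blast
  have cf: "c f \<in> {a,b}" using f cl by (auto simp: closedU_def)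
  have d: "c f \<noteq> c g" using cutcol'[OF p f(2) g(1) fg] .
  let ?d = "kempe_swap c a b U"
  have pd: "proper_col G ?d" using swap_proper[OF p ab cl] .
  have "?d f = ?d g" using f gU cf g(2) d by (auto simp: kempe_swap_def)
  thus False using cutcol'[OF pd f(2) g(1) fg] by blast
qed

lemma r_cl:
  assumes p: "proper_col G c" and ab: "a \<in> {1,2,3}" "b \<in> {1,2,3}" and cl: "closedU G c a b U"
  shows "closedU G1 (restr (edges G1) c) a b (U \<inter> edges G1)"
  unfolding closedU_def
proof (intro conjI ballI impI)
  show "U \<inter> edges G1 \<subseteq> {e \<in> edges G1. restr (edges G1) c e \<in> {a, b}}"
    using cl by (auto simp: closedU_def restr_def)
next
  fix f g assume f: "f \<in> U \<inter> edges G1" and g: "g \<in> edges G1"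
    and h: "restr (edges G1) c g \<in> {a, b} \<and> ends G1 f \<inter> ends G1 g \<noteq> {}"
  have cg: "c g \<in> {a,b}" using h g by (simp add: restr_def)
  have "ends G f \<inter> ends G g \<noteq> {} \<or> (f \<in> {e1,e2,e3} \<and> g \<in> {e1,e2,e3})" using adj1[of f g] f g h by blast
  hence "g \<in> U"
  proof
    assume "ends G f \<inter> ends G g \<noteq> {}"
    thus ?thesis using cl f g cg E1_sub unfolding closedU_def by blast
  next
    assume "f \<in> {e1,e2,e3} \<and> g \<in> {e1,e2,e3}"
    thus ?thesis using cut_closure[OF p ab cl _ _ _ cg] f by blast
  qed
  thus "g \<in> U \<inter> edges G1" using g by blast
qed

lemma lift:
  assumes p: "proper_col G c" and ab: "a \<in> {1,2,3}" "b \<in> {1,2,3}"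
    and cl: "closedU G1 (restr (edges G1) c) a b U1"
  shows "\<exists>U. closedU G c a b U \<and> U \<inter> edges G1 = U1 \<and>
      (U \<inter> edges G2 = {} \<or> U \<inter> edges G2 = {f\<in>edges G2. c f \<in> {a,b}})"
proof -
  have U1: "U1 \<subseteq> edges G1" "\<And>f. f \<in> U1 \<Longrightarrow> c f \<in> {a,b}"
    using cl by (auto simp: closedU_def restr_def)
  have cl1: "\<And>f g. f \<in> U1 \<Longrightarrow> g \<in> edges G1 \<Longrightarrow> c g \<in> {a,b} \<Longrightarrow> ends G1 f \<inter> ends G1 g \<noteq> {} \<Longrightarrow> g \<in> U1"
    using cl by (auto simp: closedU_def restr_def)
  have cutall: "g \<in> U1" if "h \<in> U1" "h \<in> {e1,e2,e3}" "g \<in> {e1,e2,e3}" "c g \<in> {a,b}" for h g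
  proof -
    have "h \<in> edges G1" "g \<in> edges G1" using that E1 by auto
    thus ?thesis using cl1[OF that(1) _ that(4)] adj1 that by blast
  qed
  define W where "W = (if U1 \<inter> {e1,e2,e3} = {} then {} else {f\<in>inside G S2. c f \<in> {a,b}})"
  define U where "U = U1 \<union> W"
  have W2: "W \<subseteq> inside G S2" by (auto simp: W_def)
  have Wmem: "g \<in> U" if "U1 \<inter> {e1,e2,e3} \<noteq> {}" "g \<in> inside G S2" "c g \<in> {a,b}" for g
    using that unfolding U_def W_def by (simp only: if_False) blast
  have clU: "closedU G c a b U"
    unfolding closedU_def
  proof (intro conjI ballI impI)
    show "U \<subseteq> {e \<in> edges G. c e \<in> {a, b}}"
      using U1 E1_sub W2 by (auto simp: U_def W_def inside_def)
  next
    fix f g assume fU: "f \<in> U" and g: "g \<in> edges G" and h: "c g \<in> {a, b} \<and> ends G f \<inter> ends G g \<noteq> {}"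
    obtain w where w: "w \<in> ends G f" "w \<in> ends G g" using h by blast
    have fE: "f \<in> edges G" using fU U1 E1_sub W2 unfolding U_def inside_def by blast
    have wS: "w \<in> S1 \<or> w \<in> S2" using w wf(3)[OF fE] part by blast
    show "g \<in> U"
    proof (cases "f \<in> U1")
      case True
      have fE1: "f \<in> edges G1" using True U1 by blast
      show ?thesis using wS
      proof
        assume wS1: "w \<in> S1"
        have gE1: "g \<in> edges G1" using S1_in_E1[OF g w(2) wS1] .
        have "ends G1 f \<inter> ends G1 g \<noteq> {}" using adj1[OF fE1 gE1] w wS1 by blast
        thus ?thesis using cl1[OF True gE1] h U_def by blast
      next
        assume wS2: "w \<in> S2"
        have fc: "f \<in> {e1,e2,e3}" using S2_cut[OF fE1 w(1) wS2] .
        show ?thesis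
        proof (cases "g \<in> edges G1")
          case True
          have "g \<in> {e1,e2,e3}" using S2_cut[OF True w(2) wS2] .
          thus ?thesis using cutall[OF \<open>f \<in> U1\<close> fc] h U_def by blast
        next
          case False
          hence "g \<in> inside G S2" using edge_cases[OF g] E1 by blast
          moreover have "U1 \<inter> {e1,e2,e3} \<noteq> {}" using fc \<open>f \<in> U1\<close> by blast
          ultimately show ?thesis using h Wmem by blast
        qed
      qed
    next
      case False
      hence fW: "f \<in> W" using fU U_def by blast
      hence ne: "U1 \<inter> {e1,e2,e3} \<noteq> {}" and fS2: "f \<in> inside G S2" by (auto simp: W_def split: if_splits)
      have wS2: "w \<in> S2" using fS2 w unfolding inside_def by blast
      have "g \<notin> inside G S1" using wS2 w part(2) unfolding inside_def by blast
      hence "g \<in> inside G S2 \<or> g \<in> {e1,e2,e3}" using edge_cases[OF g] by blast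
      thus ?thesis
      proof
        assume "g \<in> inside G S2" thus ?thesis using ne h Wmem by blast
      next
        assume gc: "g \<in> {e1,e2,e3}"
        obtain k where "k \<in> U1" "k \<in> {e1,e2,e3}" using ne by blast
        thus ?thesis using cutall gc h U_def by blast
      qed
    qed
  qed
  have WE1: "W \<inter> edges G1 = {}" using W2 in2_not_E1 by blast
  have r1: "U \<inter> edges G1 = U1" using U1 WE1 unfolding U_def by blast
  have E2: "edges G2 = inside G S2 \<union> {e1,e2,e3}" using G2 by simp
  have r2: "U \<inter> edges G2 = {} \<or> U \<inter> edges G2 = {f\<in>edges G2. c f \<in> {a,b}}"
  proof (cases "U1 \<inter> {e1,e2,e3} = {}")
    case True
    have "U1 \<inter> edges G2 = {}" using True U1(1) E12 by blast
    hence "U \<inter> edges G2 = {}" using True unfolding U_def W_def by simp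
    thus ?thesis by blast
  next
    case False
    then obtain k where k: "k \<in> U1" "k \<in> {e1,e2,e3}" by blast
    have "U1 \<inter> edges G2 = {f\<in>{e1,e2,e3}. c f \<in> {a,b}}"
      using cutall[OF k] U1 E12 E2 by blast
    hence "U \<inter> edges G2 = {f\<in>edges G2. c f \<in> {a,b}}"
      using False E2 W2 unfolding U_def W_def by auto
    thus ?thesis by blast
  qed
  show ?thesis using clU r1 r2 by blast
qed

lemma cubic1: "cubic G1"
  unfolding cubic_def wf_graph_def degree_def
proof (intro conjI ballI)
  show "finite (verts G1)" using G1 wf(1) part by (metis finite_Un finite_insert insert_is_Un mgraph.select_convs(1) sup_commute)
  show "finite (edges G1)" using E1_sub wf(2) finite_subset by blast
next
  fix e assume e: "e \<in> edges G1"
  show "ends G1 e \<subseteq> verts G1" using ends1[OF e] G1 by auto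
  show "card (ends G1 e) = 2"
  proof (cases "e \<in> {e1,e2,e3}")
    case True
    have "x1 \<noteq> v1" "x2 \<noteq> v1" "x3 \<noteq> v1" using xs S1V by auto
    thus ?thesis using True dist unfolding ends_G1 by auto
  next
    case False
    hence "e \<in> inside G S1" using e E1 by blast
    thus ?thesis using False wf(4) unfolding ends_G1 inside_def by auto
  qed
next
  fix v assume v: "v \<in> verts G1"
  show "card {e \<in> edges G1. v \<in> ends G1 e} = 3"
  proof (cases "v = v1")
    case True
    have "{e \<in> edges G1. v \<in> ends G1 e} = {e1,e2,e3}"
    proof
      show "{e \<in> edges G1. v \<in> ends G1 e} \<subseteq> {e1, e2, e3}" using ends1 True S1V(2) by (auto split: if_splits)
      show "{e1, e2, e3} \<subseteq> {e \<in> edges G1. v \<in> ends G1 e}" using ends1 True E1 by auto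
    qed
    thus ?thesis using dist by simp
  next
    case False
    hence vS: "v \<in> S1" using v G1 by simp
    have "{e \<in> edges G1. v \<in> ends G1 e} = {e \<in> edges G. v \<in> ends G e}"
    proof
      show "{e \<in> edges G1. v \<in> ends G1 e} \<subseteq> {e \<in> edges G. v \<in> ends G e}"
        using ends1 False E1_sub by (auto split: if_splits)
      show "{e \<in> edges G. v \<in> ends G e} \<subseteq> {e \<in> edges G1. v \<in> ends G1 e}"
        using ends1 S1_in_E1 vS by auto
    qed
    thus ?thesis using cub vS S1V unfolding cubic_def degree_def by auto
  qed
qed

end



context s3 begin

lemma E2: "edges G2 = inside G S2 \<union> {e1,e2,e3}" using G2 by simp

lemma edges_cover: "f \<in> edges G \<Longrightarrow> f \<in> edges G1 \<or> f \<in> edges G2"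
  using edge_cases E1 E2 by blast

lemma finE1: "finite (edges G1)" using E1_sub wf(2) finite_subset by blast

lemma det:
  assumes p: "proper_col G c" "proper_col G d" and r: "restr (edges G1) c = restr (edges G1) d"
    "restr (edges G2) c = restr (edges G2) d"
  shows "c = d"
proof
  fix f
  show "c f = d f"
  proof (cases "f \<in> edges G")
    case True
    then consider "f \<in> edges G1" | "f \<in> edges G2" using edges_cover by blast
    thus ?thesis using fun_cong[OF r(1), of f] fun_cong[OF r(2), of f] by cases (auto simp: restr_def)
  next
    case False thus ?thesis using p by (simp add: proper_col_def)
  qed
qed

lemma fix2:
  assumes pe: "proper_col G e" and pc: "proper_col G c" and r2: "restr (edges G2) e = restr (edges G2) c"
    and pi: "perm3 \<pi>" and r1: "restr (edges G1) e = \<pi> \<circ> restr (edges G1) c"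
  shows "(e,c) \<in> kempe_rel G"
proof -
  have fixj: "\<pi> (c f) = c f" if f: "f \<in> {e1,e2,e3}" for f
  proof -
    have "f \<in> edges G1" "f \<in> edges G2" using f E1 E2 by auto
    hence "e f = c f" "e f = \<pi> (c f)" using fun_cong[OF r2, of f] fun_cong[OF r1, of f] by (auto simp: restr_def)
    thus ?thesis by simp
  qed
  have col: "c e1 \<in> {1,2,3}" "c e2 \<in> {1,2,3}" "c e3 \<in> {1,2,3}" using pc cut_edges by (auto simp: proper_col_def)
  have dd: "c e1 \<noteq> c e2 \<and> c e1 \<noteq> c e3 \<and> c e2 \<noteq> c e3" using cutcol[OF pc] .
  have all: "x = c e1 \<or> x = c e2 \<or> x = c e3" if "x \<in> {1,2,3}" for x :: nat
    using that col dd by auto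
  have pix: "\<pi> x = x" if "x \<in> {0,1,2,3}" for x
  proof (cases "x = 0")
    case True thus ?thesis using pi by (simp add: perm3_def)
  next
    case False
    hence "x \<in> {1,2,3}" using that by simp
    from all[OF this] show ?thesis using fixj by auto
  qed
  have "restr (edges G1) e = restr (edges G1) c"
  proof
    fix f
    have "restr (edges G1) c f \<in> {0,1,2,3}" using pc E1_sub by (auto simp: restr_def proper_col_def)
    thus "restr (edges G1) e f = restr (edges G1) c f" using fun_cong[OF r1, of f] pix by simp
  qed
  hence "e = c" using det[OF pe pc _ r2] by simp
  thus ?thesis using kr_refl[OF wf(2) pc] by simp
qed

lemma cutcol1:
  assumes p: "proper_col G1 d" and f: "f \<in> {e1,e2,e3}" and g: "g \<in> {e1,e2,e3}" and fg: "f \<noteq> g"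
  shows "d f \<noteq> d g"
proof -
  have E: "f \<in> edges G1" "g \<in> edges G1" using f g E1 by auto
  have "v1 \<in> ends G1 f" "v1 \<in> ends G1 g" using ends1[OF E(1)] ends1[OF E(2)] f g by auto
  thus ?thesis using p E fg unfolding proper_col_def by blast
qed

lemma align_step:
  assumes p: "proper_col H d" and x: "x \<in> {1,2,3}" and df: "d f \<in> {1,2,3}"
  shows "proper_col H (if d f = x then d else tr (d f) x \<circ> d) \<and>
         (d, if d f = x then d else tr (d f) x \<circ> d) \<in> (cs H)\<^sup>*"
proof (cases "d f = x")
  case True thus ?thesis using p by simp
next
  case False
  have "(d, tr (d f) x \<circ> d) \<in> cs H" using tr_cs[OF p False df x] .
  thus ?thesis using False cs_proper by auto
qed

lemma surj:
  assumes c1: "c1 \<in> colorings G1" and c2: "c2 \<in> colorings G2"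
  shows "\<exists>c\<in>colorings G. (restr (edges G1) c, c1) \<in> kempe_rel G1 \<and> (restr (edges G2) c, c2) \<in> kempe_rel G2"
proof -
  interpret S: s3 G G2 G1 S2 S1 e1 e2 e3 y1 y2 y3 x1 x2 x3 v2 v1 by (rule sym)
  have p1: "proper_col G1 c1" and p2: "proper_col G2 c2" using c1 c2 by (auto simp: colorings_def)
  have finE2: "finite (edges G2)" using S.finE1 .
  have cE1: "{e1,e2,e3} \<subseteq> edges G1" using E1 by auto
  have cE2: "{e1,e2,e3} \<subseteq> edges G2" using E2 by auto
  have col1: "c1 e1 \<in> {1,2,3}" "c1 e2 \<in> {1,2,3}" "c1 e3 \<in> {1,2,3}" using p1 cE1 by (auto simp: proper_col_def)
  have d1: "c1 e1 \<noteq> c1 e2" "c1 e1 \<noteq> c1 e3" "c1 e2 \<noteq> c1 e3" using cutcol1[OF p1] dist by auto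
  define ca where "ca = (if c2 e1 = c1 e1 then c2 else tr (c2 e1) (c1 e1) \<circ> c2)"
  have "c2 e1 \<in> {1,2,3}" using p2 cE2 by (auto simp: proper_col_def)
  hence ca: "proper_col G2 ca" "(c2, ca) \<in> (cs G2)\<^sup>*" using align_step[OF p2 col1(1)] unfolding ca_def by auto
  have ca1: "ca e1 = c1 e1" by (simp add: ca_def tr_def)
  have ca_d: "ca e1 \<noteq> ca e2" using S.cutcol1[OF ca(1)] dist by auto
  define cb where "cb = (if ca e2 = c1 e2 then ca else tr (ca e2) (c1 e2) \<circ> ca)"
  have "ca e2 \<in> {1,2,3}" using ca(1) cE2 by (auto simp: proper_col_def)
  hence cb: "proper_col G2 cb" "(ca, cb) \<in> (cs G2)\<^sup>*" using align_step[OF ca(1) col1(2)] unfolding cb_def by auto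
  have cb1: "cb e1 = c1 e1" using ca1 ca_d d1 by (simp add: cb_def tr_def)
  have cb2: "cb e2 = c1 e2" by (simp add: cb_def tr_def)
  have cbd: "cb e1 \<noteq> cb e3" "cb e2 \<noteq> cb e3" using S.cutcol1[OF cb(1)] dist by auto
  have "cb e3 \<in> {1,2,3}" using cb(1) cE2 by (auto simp: proper_col_def)
  hence cb3: "cb e3 = c1 e3" using cbd cb1 cb2 col1 d1 by auto
  have agree: "c1 f = cb f" if "f \<in> {e1,e2,e3}" for f using that cb1 cb2 cb3 by auto
  have c2cb: "(c2, cb) \<in> (cs G2)\<^sup>*" using ca(2) cb(2) by simp
  define c where "c = (\<lambda>f. if f \<in> edges G1 then c1 f else cb f)"
  have cc1: "c f = c1 f" if "f \<in> edges G1" for f using that by (simp add: c_def)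
  have cc2: "c f = cb f" if "f \<in> edges G2" for f using that agree E12 by (auto simp: c_def)
  have pc: "proper_col G c"
    unfolding proper_col_def
  proof (intro conjI allI impI ballI)
    fix f assume "f \<notin> edges G"
    hence "f \<notin> edges G1" "f \<notin> edges G2" using E1_sub S.E1_sub by auto
    thus "c f = 0" using cb(1) by (simp add: c_def proper_col_def)
  next
    fix f assume "f \<in> edges G"
    hence "f \<in> edges G1 \<or> f \<in> edges G2" using edges_cover by blast
    thus "c f \<in> {1,2,3}" using cc1 cc2 p1 cb(1) unfolding proper_col_def by auto
  next
    fix f g assume f: "f \<in> edges G" and g: "g \<in> edges G" and h: "f \<noteq> g \<and> ends G f \<inter> ends G g \<noteq> {}"
    obtain w where w: "w \<in> ends G f" "w \<in> ends G g" using h by blast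
    have "w \<in> S1 \<or> w \<in> S2" using w wf(3)[OF f] part by blast
    thus "c f \<noteq> c g"
    proof
      assume wS: "w \<in> S1"
      have E: "f \<in> edges G1" "g \<in> edges G1" using S1_in_E1 f g w wS by auto
      have "ends G1 f \<inter> ends G1 g \<noteq> {}" using adj1[OF E] w wS by blast
      hence "c1 f \<noteq> c1 g" using p1 E h unfolding proper_col_def by blast
      thus ?thesis using cc1 E by simp
    next
      assume wS: "w \<in> S2"
      have E: "f \<in> edges G2" "g \<in> edges G2" using S.S1_in_E1 f g w wS by auto
      have "ends G2 f \<inter> ends G2 g \<noteq> {}" using S.adj1[OF E] w wS by blast
      hence "cb f \<noteq> cb g" using cb(1) E h unfolding proper_col_def by blast
      thus ?thesis using cc2 E by simp
    qed
  qed
  have r1: "restr (edges G1) c = c1"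
  proof
    fix f show "restr (edges G1) c f = c1 f" using cc1 p1 by (auto simp: restr_def proper_col_def)
  qed
  have r2: "restr (edges G2) c = cb"
  proof
    fix f show "restr (edges G2) c f = cb f" using cc2 cb(1) by (auto simp: restr_def proper_col_def)
  qed
  have "(restr (edges G1) c, c1) \<in> kempe_rel G1" using r1 kr_refl[OF finE1 p1] by simp
  moreover have "(restr (edges G2) c, c2) \<in> kempe_rel G2"
    using r2 kr_sym[OF finE2 csr_kr[OF finE2 p2 c2cb]] by simp
  ultimately show ?thesis using pc by (auto simp: colorings_def)
qed

lemma is_glue: "glue G G1 G2 (edges G1) (edges G2)"
proof -
  interpret S: s3 G G2 G1 S2 S1 e1 e2 e3 y1 y2 y3 x1 x2 x3 v2 v1 by (rule sym)
  show ?thesis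
  proof (unfold_locales)
    show "finite (edges G)" by (rule wf(2))
    show "finite (edges G1)" by (rule finE1)
    show "finite (edges G2)" by (rule S.finE1)
  next
    fix c assume "proper_col G c" thus "proper_col G1 (restr (edges G1) c)" by (rule r_col)
  next
    fix c assume "proper_col G c" thus "proper_col G2 (restr (edges G2) c)" by (rule S.r_col)
  next
    fix c a b U assume "proper_col G c" "a \<in> {1,2,3}" "b \<in> {1,2,3}" "a \<noteq> b" "closedU G c a b U"
    thus "closedU G1 (restr (edges G1) c) a b (U \<inter> edges G1)" using r_cl by blast
  next
    fix c a b U assume "proper_col G c" "a \<in> {1,2,3}" "b \<in> {1,2,3}" "a \<noteq> b" "closedU G c a b U"
    thus "closedU G2 (restr (edges G2) c) a b (U \<inter> edges G2)" using S.r_cl by blast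
  next
    fix c a b U1 assume "proper_col G c" "a \<in> {1,2,3}" "b \<in> {1,2,3}" "a \<noteq> b"
      "closedU G1 (restr (edges G1) c) a b U1"
    thus "\<exists>U. closedU G c a b U \<and> U \<inter> edges G1 = U1 \<and>
      (U \<inter> edges G2 = {} \<or> U \<inter> edges G2 = {f\<in>edges G2. c f \<in> {a,b}})" using lift by blast
  next
    fix c a b U2 assume "proper_col G c" "a \<in> {1,2,3}" "b \<in> {1,2,3}" "a \<noteq> b"
      "closedU G2 (restr (edges G2) c) a b U2"
    thus "\<exists>U. closedU G c a b U \<and> U \<inter> edges G2 = U2 \<and>
      (U \<inter> edges G1 = {} \<or> U \<inter> edges G1 = {f\<in>edges G1. c f \<in> {a,b}})" using S.lift by blast
  next
    fix e c \<pi> assume "proper_col G e" "proper_col G c" "restr (edges G2) e = restr (edges G2) c"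
      "perm3 \<pi>" "restr (edges G1) e = \<pi> \<circ> restr (edges G1) c"
    thus "(e,c) \<in> kempe_rel G" by (rule fix2)
  next
    fix c1 c2 assume "c1 \<in> colorings G1" "c2 \<in> colorings G2"
    thus "\<exists>c\<in>colorings G. (restr (edges G1) c, c1) \<in> kempe_rel G1 \<and> (restr (edges G2) c, c2) \<in> kempe_rel G2"
      by (rule surj)
  qed
qed

lemma result: "Kp G = Kp G1 * Kp G2 \<and> cubic G1 \<and> cubic G2 \<and> (colorable3 G \<longrightarrow> colorable3 G1 \<and> colorable3 G2)"
proof -
  interpret S: s3 G G2 G1 S2 S1 e1 e2 e3 y1 y2 y3 x1 x2 x3 v2 v1 by (rule sym)
  interpret gl: glue G G1 G2 "edges G1" "edges G2" by (rule is_glue)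
  have "colorable3 G \<longrightarrow> colorable3 G1 \<and> colorable3 G2"
    using r_col S.r_col unfolding colorable3_def colorings_def by blast
  thus ?thesis using gl.glue_card cubic1 S.cubic1 by blast
qed

end



locale s2 =
  fixes G G1 G2 :: mgraph and S1 S2 :: "nat set" and e1 e2 x1 x2 y1 y2 :: nat
  assumes cub: "cubic G"
  and part: "S1 \<union> S2 = verts G" "S1 \<inter> S2 = {}"
  and ne: "e1 \<noteq> e2" and cross: "crossing G S1 S2 = {e1,e2}"
  and en: "ends G e1 = {x1,y1}" "ends G e2 = {x2,y2}"
  and xs: "x1 \<in> S1" "x2 \<in> S1" and ys: "y1 \<in> S2" "y2 \<in> S2" and xne: "x1 \<noteq> x2" and yne: "y1 \<noteq> y2"
  and G1: "G1 = \<lparr>verts = S1, edges = inside G S1 \<union> {e1}, ends = (ends G)(e1 := {x1,x2})\<rparr>"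
  and G2: "G2 = \<lparr>verts = S2, edges = inside G S2 \<union> {e1}, ends = (ends G)(e1 := {y1,y2})\<rparr>"
begin

lemma sym: "s2 G G2 G1 S2 S1 e1 e2 y1 y2 x1 x2"
proof -
  have "crossing G S2 S1 = crossing G S1 S2" unfolding crossing_def by blast
  thus ?thesis using cub part ne cross en xs ys xne yne G1 G2
    by unfold_locales (auto simp: insert_commute)
qed

definition psi :: "nat \<Rightarrow> nat" where "psi f = (if f = e2 then e1 else f)"

lemma wf: "finite (verts G)" "finite (edges G)"
  "\<And>e. e \<in> edges G \<Longrightarrow> ends G e \<subseteq> verts G" "\<And>e. e \<in> edges G \<Longrightarrow> card (ends G e) = 2"
  using cub by (auto simp: cubic_def wf_graph_def)

lemma ends_ne: "e \<in> edges G \<Longrightarrow> ends G e \<noteq> {}"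
  using wf(4) by fastforce

lemma E1: "edges G1 = inside G S1 \<union> {e1}" using G1 by simp
lemma E2: "edges G2 = inside G S2 \<union> {e1}" using G2 by simp
lemma ends_G1: "ends G1 = (ends G)(e1 := {x1,x2})" using G1 by simp

lemma cut_edges: "e1 \<in> edges G" "e2 \<in> edges G" using cross unfolding crossing_def by blast+

lemma cut_not_in1: "f \<in> {e1,e2} \<Longrightarrow> f \<notin> inside G S1"
  using en ys part(2) unfolding inside_def by auto

lemma cut_not_in2: "f \<in> {e1,e2} \<Longrightarrow> f \<notin> inside G S2"
  using en xs part(2) unfolding inside_def by auto

lemma edge_cases: "f \<in> edges G \<Longrightarrow> f \<in> inside G S1 \<or> f \<in> inside G S2 \<or> f \<in> {e1,e2}"
proof -
  assume f: "f \<in> edges G"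
  have "ends G f \<subseteq> S1 \<union> S2" using wf(3)[OF f] part by simp
  moreover have "f \<notin> crossing G S1 S2 \<Longrightarrow> ends G f \<inter> S1 = {} \<or> ends G f \<inter> S2 = {}"
    using f unfolding crossing_def by blast
  ultimately show ?thesis using f cross unfolding inside_def by blast
qed

lemma ins_disj: "f \<in> inside G S1 \<Longrightarrow> f \<notin> inside G S2"
  using ends_ne part(2) unfolding inside_def by blast

lemma in2_not_E1: "f \<in> inside G S2 \<Longrightarrow> f \<notin> edges G1"
  using E1 cut_not_in2 ins_disj by blast

lemma e2_not_E1: "e2 \<notin> edges G1" using E1 cut_not_in1 ne by blast

lemma E1_sub: "edges G1 \<subseteq> edges G" using E1 cut_edges unfolding inside_def by blast

lemma finE1: "finite (edges G1)" using E1_sub wf(2) finite_subset by blast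

lemma E12: "f \<in> edges G1 \<Longrightarrow> f \<in> edges G2 \<Longrightarrow> f = e1"
  using E1 E2 ins_disj by auto

lemma ends1: "f \<in> edges G1 \<Longrightarrow> ends G1 f = (ends G f \<inter> S1) \<union> (if f = e1 then {x2} else {})"
proof -
  assume f: "f \<in> edges G1"
  show ?thesis
  proof (cases "f = e1")
    case True
    then show ?thesis using en xs ys part(2) unfolding ends_G1 by auto
  next
    case False
    hence "f \<in> inside G S1" using f E1 by blast
    thus ?thesis using False unfolding ends_G1 inside_def by auto
  qed
qed

lemma ends1_sub: "f \<in> edges G1 \<Longrightarrow> ends G1 f \<subseteq> S1"
  using ends1 xs by auto

lemma e2S1: "ends G e2 \<inter> S1 = {x2}" "ends G e1 \<inter> S1 = {x1}" using en xs ys part(2) by auto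

lemma lift_vertex:
  assumes f: "f \<in> edges G1" and w: "w \<in> ends G1 f"
  shows "\<exists>f'. (f' = f \<or> (f = e1 \<and> f' = e2)) \<and> w \<in> ends G f'"
proof (cases "f = e1")
  case True
  hence "w = x1 \<or> w = x2" using w unfolding ends_G1 by simp
  thus ?thesis using True en by auto
next
  case False
  thus ?thesis using w ends1[OF f] by auto
qed

lemma down_vertex:
  assumes f: "f \<in> edges G" and w: "w \<in> ends G f" "w \<in> S1"
  shows "psi f \<in> edges G1 \<and> w \<in> ends G1 (psi f)"
proof -
  have "f \<in> inside G S1 \<or> f \<in> {e1,e2}" using edge_cases[OF f] w part(2) unfolding inside_def by blast
  thus ?thesis
  proof
    assume "f \<in> inside G S1"
    hence "f \<noteq> e1" "f \<noteq> e2" using cut_not_in1 by auto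
    thus ?thesis using \<open>f \<in> inside G S1\<close> w E1 unfolding psi_def ends_G1 by auto
  next
    assume "f \<in> {e1,e2}"
    thus ?thesis using w e2S1 ne E1 unfolding psi_def ends_G1 by auto
  qed
qed

lemma psi_ne:
  assumes "f \<noteq> g" "w \<in> ends G f" "w \<in> ends G g" "w \<in> S1"
  shows "psi f \<noteq> psi g"
proof
  assume "psi f = psi g"
  hence "{f,g} = {e1,e2}" using assms(1) unfolding psi_def by (auto split: if_splits)
  hence "w \<in> ends G e1 \<inter> S1" "w \<in> ends G e2 \<inter> S1" using assms by auto
  thus False using e2S1 xne by auto
qed

lemma cutcol: "proper_col G c \<Longrightarrow> c e1 = c e2"
  using cut2_colors[OF cub _ part ne cross] by blast

lemma c_psi: "proper_col G c \<Longrightarrow> c (psi f) = c f"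
  using cutcol unfolding psi_def by auto

lemma r_col: "proper_col G c \<Longrightarrow> proper_col G1 (restr (edges G1) c)"
proof -
  assume p: "proper_col G c"
  show ?thesis unfolding proper_col_def
  proof (intro conjI allI impI ballI)
    fix e assume "e \<notin> edges G1" thus "restr (edges G1) c e = 0" by (simp add: restr_def)
  next
    fix e assume "e \<in> edges G1" thus "restr (edges G1) c e \<in> {1,2,3}"
      using p E1_sub by (auto simp: restr_def proper_col_def)
  next
    fix e f assume e: "e \<in> edges G1" and f: "f \<in> edges G1" and h: "e \<noteq> f \<and> ends G1 e \<inter> ends G1 f \<noteq> {}"
    obtain w where w: "w \<in> ends G1 e" "w \<in> ends G1 f" using h by blast
    obtain e' where e': "e' = e \<or> (e = e1 \<and> e' = e2)" "w \<in> ends G e'" using lift_vertex[OF e w(1)] by blast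
    obtain f' where f': "f' = f \<or> (f = e1 \<and> f' = e2)" "w \<in> ends G f'" using lift_vertex[OF f w(2)] by blast
    have "e' \<noteq> f'" using e' f' h e f e2_not_E1 by auto
    moreover have "e' \<in> edges G" "f' \<in> edges G" using e' f' e f E1_sub cut_edges by auto
    ultimately have "c e' \<noteq> c f'" using p e'(2) f'(2) unfolding proper_col_def by blast
    moreover have "c e' = c e" "c f' = c f" using e' f' cutcol[OF p] by auto
    ultimately show "restr (edges G1) c e \<noteq> restr (edges G1) c f" using e f by (simp add: restr_def)
  qed
qed

lemma cut_closure:
  assumes p: "proper_col G c" and ab: "a \<in> {1,2,3}" "b \<in> {1,2,3}" "a \<noteq> b" and cl: "closedU G c a b U"
  shows "e1 \<in> U \<longleftrightarrow> e2 \<in> U"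
proof (rule ccontr)
  assume h: "\<not> (e1 \<in> U \<longleftrightarrow> e2 \<in> U)"
  have ce: "c e1 = c e2" using cutcol[OF p] .
  have "c e1 \<in> {a,b}" using h cl ce by (auto simp: closedU_def)
  let ?d = "kempe_swap c a b U"
  have pd: "proper_col G ?d" using swap_proper[OF p ab(1,2) cl] .
  have "?d e1 \<noteq> ?d e2" using h ce \<open>c e1 \<in> {a,b}\<close> ab(3) by (auto simp: kempe_swap_def)
  thus False using cutcol[OF pd] by blast
qed

lemma r_cl:
  assumes p: "proper_col G c" and ab: "a \<in> {1,2,3}" "b \<in> {1,2,3}" "a \<noteq> b" and cl: "closedU G c a b U"
  shows "closedU G1 (restr (edges G1) c) a b (U \<inter> edges G1)"
  unfolding closedU_def
proof (intro conjI ballI impI)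
  show "U \<inter> edges G1 \<subseteq> {e \<in> edges G1. restr (edges G1) c e \<in> {a, b}}"
    using cl by (auto simp: closedU_def restr_def)
next
  fix f g assume f: "f \<in> U \<inter> edges G1" and g: "g \<in> edges G1"
    and h: "restr (edges G1) c g \<in> {a, b} \<and> ends G1 f \<inter> ends G1 g \<noteq> {}"
  have cg: "c g \<in> {a,b}" using h g by (simp add: restr_def)
  have cc: "e1 \<in> U \<longleftrightarrow> e2 \<in> U" using cut_closure[OF p ab cl] .
  obtain w where w: "w \<in> ends G1 f" "w \<in> ends G1 g" using h by blast
  obtain f' where f': "f' = f \<or> (f = e1 \<and> f' = e2)" "w \<in> ends G f'" using lift_vertex[OF _ w(1)] f by blast
  obtain g' where g': "g' = g \<or> (g = e1 \<and> g' = e2)" "w \<in> ends G g'" using lift_vertex[OF g w(2)] by blast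
  have f'U: "f' \<in> U" using f' f cc by auto
  have g'E: "g' \<in> edges G" using g' g E1_sub cut_edges by auto
  have "c g' = c g" using g' cutcol[OF p] by auto
  hence "g' \<in> U" using cl f'U g'E cg f'(2) g'(2) unfolding closedU_def by blast
  hence "g \<in> U" using g' cc by auto
  thus "g \<in> U \<inter> edges G1" using g by blast
qed

lemma lift:
  assumes p: "proper_col G c" and ab: "a \<in> {1,2,3}" "b \<in> {1,2,3}"
    and cl: "closedU G1 (restr (edges G1) c) a b U1"
  shows "\<exists>U. closedU G c a b U \<and> U \<inter> edges G1 = U1 \<and>
      (U \<inter> edges G2 = {} \<or> U \<inter> edges G2 = {f\<in>edges G2. c f \<in> {a,b}})"
proof -
  have U1: "U1 \<subseteq> edges G1" "\<And>f. f \<in> U1 \<Longrightarrow> c f \<in> {a,b}"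
    using cl by (auto simp: closedU_def restr_def)
  have cl1: "\<And>f g. f \<in> U1 \<Longrightarrow> g \<in> edges G1 \<Longrightarrow> c g \<in> {a,b} \<Longrightarrow> ends G1 f \<inter> ends G1 g \<noteq> {} \<Longrightarrow> g \<in> U1"
    using cl by (auto simp: closedU_def restr_def)
  define W where "W = (if e1 \<in> U1 then {f\<in>inside G S2 \<union> {e2}. c f \<in> {a,b}} else {})"
  define U where "U = U1 \<union> W"
  have W2: "W \<subseteq> inside G S2 \<union> {e2}" by (auto simp: W_def)
  have Wmem: "g \<in> U" if "e1 \<in> U1" "g \<in> inside G S2 \<union> {e2}" "c g \<in> {a,b}" for g
    using that unfolding U_def W_def by (simp only: if_True) blast
  have We1: "e1 \<in> U1" if "f \<in> W" for f using that by (auto simp: W_def split: if_splits)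
  have ce: "c e1 = c e2" using cutcol[OF p] .
  have clU: "closedU G c a b U"
    unfolding closedU_def
  proof (intro conjI ballI impI)
    show "U \<subseteq> {e \<in> edges G. c e \<in> {a, b}}"
      using U1 E1_sub W2 cut_edges by (auto simp: U_def W_def inside_def)
  next
    fix f g assume fU: "f \<in> U" and g: "g \<in> edges G" and h: "c g \<in> {a, b} \<and> ends G f \<inter> ends G g \<noteq> {}"
    obtain w where w: "w \<in> ends G f" "w \<in> ends G g" using h by blast
    have fE: "f \<in> edges G" using fU U1 E1_sub W2 cut_edges unfolding U_def inside_def by blast
    have "w \<in> S1 \<or> w \<in> S2" using w wf(3)[OF fE] part by blast
    thus "g \<in> U"
    proof
      assume wS: "w \<in> S1"
      have df: "psi f \<in> edges G1" "w \<in> ends G1 (psi f)" using down_vertex[OF fE w(1) wS] by auto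
      have dg: "psi g \<in> edges G1" "w \<in> ends G1 (psi g)" using down_vertex[OF g w(2) wS] by auto
      have pf: "psi f \<in> U1"
      proof (cases "f \<in> U1")
        case True
        hence "f \<noteq> e2" using U1 e2_not_E1 by auto
        thus ?thesis using True by (simp add: psi_def)
      next
        case False
        hence fW: "f \<in> W" using fU U_def by blast
        hence "f \<in> inside G S2 \<or> f = e2" using W2 by blast
        hence "f = e2" using wS w part(2) unfolding inside_def by blast
        thus ?thesis using We1[OF fW] by (simp add: psi_def)
      qed
      have cpg: "c (psi g) \<in> {a,b}" using h c_psi[OF p] by simp
      have "psi g \<in> U1"
        using cl1[OF pf dg(1) cpg] df dg by blast
      thus "g \<in> U"
      proof (cases "g = e2")
        case True
        hence "e1 \<in> U1" using \<open>psi g \<in> U1\<close> by (simp add: psi_def)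
        thus ?thesis using Wmem True h by blast
      next
        case False thus ?thesis using \<open>psi g \<in> U1\<close> U_def by (simp add: psi_def)
      qed
    next
      assume wS: "w \<in> S2"
      have e1U: "e1 \<in> U1"
      proof (cases "f \<in> U1")
        case True
        have "f \<notin> inside G S1" using w wS part(2) unfolding inside_def by blast
        hence "f = e1" using True U1 E1 by blast
        thus ?thesis using True by simp
      next
        case False thus ?thesis using fU U_def We1 by blast
      qed
      have "g \<notin> inside G S1" using w wS part(2) unfolding inside_def by blast
      hence "g = e1 \<or> g \<in> inside G S2 \<union> {e2}" using edge_cases[OF g] by blast
      thus "g \<in> U" using e1U Wmem h U_def by blast
    qed
  qed
  have WE1: "W \<inter> edges G1 = {}" using W2 in2_not_E1 e2_not_E1 by blast
  have r1: "U \<inter> edges G1 = U1" using U1 WE1 unfolding U_def by blast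
  have r2: "U \<inter> edges G2 = {} \<or> U \<inter> edges G2 = {f\<in>edges G2. c f \<in> {a,b}}"
  proof (cases "e1 \<in> U1")
    case False
    have "U1 \<inter> edges G2 = {}" using False U1(1) E12 by blast
    hence "U \<inter> edges G2 = {}" using False unfolding U_def W_def by simp
    thus ?thesis by blast
  next
    case True
    have "c e1 \<in> {a,b}" using U1(2)[OF True] .
    have "U1 \<inter> edges G2 = {e1}" using True U1(1) E12 E2 by blast
    moreover have "W \<inter> edges G2 = {f\<in>inside G S2. c f \<in> {a,b}}"
      using True E2 cut_not_in2 ne unfolding W_def by auto
    ultimately have "U \<inter> edges G2 = {f\<in>edges G2. c f \<in> {a,b}}"
      using \<open>c e1 \<in> {a,b}\<close> E2 unfolding U_def by auto
    thus ?thesis by blast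
  qed
  show ?thesis using clU r1 r2 by blast
qed

lemma cubic1: "cubic G1"
  unfolding cubic_def wf_graph_def degree_def
proof (intro conjI ballI)
  show "finite (verts G1)" using G1 wf(1) part by (metis finite_Un mgraph.select_convs(1))
  show "finite (edges G1)" by (rule finE1)
next
  fix e assume e: "e \<in> edges G1"
  show "ends G1 e \<subseteq> verts G1" using ends1_sub[OF e] G1 by auto
  show "card (ends G1 e) = 2"
  proof (cases "e = e1")
    case True
    thus ?thesis using xne unfolding ends_G1 by auto
  next
    case False
    hence "e \<in> inside G S1" using e E1 by blast
    thus ?thesis using False wf(4) unfolding ends_G1 inside_def by auto
  qed
next
  fix v assume v: "v \<in> verts G1"
  hence vS: "v \<in> S1" using G1 by simp
  let ?A = "{e \<in> edges G. v \<in> ends G e}" and ?B = "{e \<in> edges G1. v \<in> ends G1 e}"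
  have "bij_betw psi ?A ?B"
  proof (rule bij_betw_imageI)
    show "inj_on psi ?A"
    proof (rule inj_onI)
      fix f g assume f: "f \<in> ?A" and g: "g \<in> ?A" and pg: "psi f = psi g"
      show "f = g" using psi_ne[of f g v] f g vS pg by blast
    qed
    show "psi ` ?A = ?B"
    proof
      show "psi ` ?A \<subseteq> ?B" using down_vertex vS by blast
      show "?B \<subseteq> psi ` ?A"
      proof
        fix g assume g: "g \<in> ?B"
        obtain g' where g': "g' = g \<or> (g = e1 \<and> g' = e2)" "v \<in> ends G g'" using lift_vertex g by blast
        have "g' \<in> ?A" using g' g E1_sub cut_edges by auto
        moreover have "psi g' = g" using g' g e2_not_E1 unfolding psi_def by auto
        ultimately show "g \<in> psi ` ?A" by blast
      qed
    qed
  qed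
  hence "card ?B = card ?A" by (simp add: bij_betw_same_card)
  also have "card ?A = 3" using cub vS part unfolding cubic_def degree_def by auto
  finally show "card ?B = 3" .
qed

end



lemma align_step_g:
  assumes p: "proper_col H d" and x: "x \<in> {1,2,3}" and df: "d f \<in> {1,2,3}"
  shows "proper_col H (if d f = x then d else tr (d f) x \<circ> d) \<and>
         (d, if d f = x then d else tr (d f) x \<circ> d) \<in> (cs H)\<^sup>*"
proof (cases "d f = x")
  case True thus ?thesis using p by simp
next
  case False
  have "(d, tr (d f) x \<circ> d) \<in> cs H" using tr_cs[OF p False df x] .
  thus ?thesis using False cs_proper by auto
qed

context s2 begin

lemma det:
  assumes p: "proper_col G c" "proper_col G d" and r: "restr (edges G1) c = restr (edges G1) d"
    "restr (edges G2) c = restr (edges G2) d"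
  shows "c = d"
proof
  fix f
  have e1: "c e1 = d e1" using fun_cong[OF r(1), of e1] E1 by (simp add: restr_def)
  show "c f = d f"
  proof (cases "f \<in> edges G")
    case True
    then consider "f \<in> edges G1" | "f \<in> edges G2" | "f = e2" using edge_cases E1 E2 by blast
    thus ?thesis
    proof cases
      case 1 thus ?thesis using fun_cong[OF r(1), of f] by (simp add: restr_def)
    next
      case 2 thus ?thesis using fun_cong[OF r(2), of f] by (simp add: restr_def)
    next
      case 3 thus ?thesis using e1 cutcol[OF p(1)] cutcol[OF p(2)] by simp
    qed
  next
    case False thus ?thesis using p by (simp add: proper_col_def)
  qed
qed

lemma other2: "k \<in> {1,2,3::nat} \<Longrightarrow> \<exists>a b. a \<noteq> b \<and> a \<noteq> k \<and> b \<noteq> k \<and> a \<in> {1,2,3} \<and> b \<in> {1,2,3}"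
proof -
  assume "k \<in> {1,2,3::nat}"
  then consider "k = 1" | "k = 2" | "k = 3" by blast
  thus ?thesis
  proof cases
    case 1 show ?thesis by (rule exI[of _ 2], rule exI[of _ 3]) (simp add: 1)
  next
    case 2 show ?thesis by (rule exI[of _ 1], rule exI[of _ 3]) (simp add: 2)
  next
    case 3 show ?thesis by (rule exI[of _ 1], rule exI[of _ 2]) (simp add: 3)
  qed
qed

lemma fix2:
  assumes pe: "proper_col G e" and pc: "proper_col G c" and r2: "restr (edges G2) e = restr (edges G2) c"
    and pi: "perm3 \<pi>" and r1: "restr (edges G1) e = \<pi> \<circ> restr (edges G1) c"
  shows "(e,c) \<in> kempe_rel G"
proof -
  have e1E: "e1 \<in> edges G1" "e1 \<in> edges G2" using E1 E2 by auto
  have ee1: "e e1 = c e1" using fun_cong[OF r2, of e1] e1E by (simp add: restr_def)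
  have pk: "\<pi> (c e1) = c e1" using fun_cong[OF r1, of e1] e1E ee1 by (simp add: restr_def)
  define k where "k = c e1"
  have k: "k \<in> {1,2,3}" using pc cut_edges unfolding k_def proper_col_def by auto
  obtain a b where ab: "a \<noteq> b" "a \<noteq> k" "b \<noteq> k" "a \<in> {1,2,3}" "b \<in> {1,2,3}" using other2[OF k] by blast
  have three: "x = a \<or> x = b \<or> x = k" if "x \<in> {1,2,3}" for x using that ab k by auto
  have p0: "\<pi> 0 = 0" and inj: "inj_on \<pi> {1,2,3}" and img: "\<pi> ` {1,2,3} \<subseteq> {1,2,3}" using pi by (auto simp: perm3_def)
  have pk': "\<pi> k = k" using pk k_def by simp
  have pa: "\<pi> a \<noteq> k" using inj ab k pk' unfolding inj_on_def by metis
  have pb: "\<pi> b \<noteq> k" using inj ab k pk' unfolding inj_on_def by metis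
  have pab: "\<pi> a \<noteq> \<pi> b" using inj ab unfolding inj_on_def by metis
  have pa3: "\<pi> a \<in> {1,2,3}" "\<pi> b \<in> {1,2,3}" using img ab by auto
  have vals: "restr (edges G1) c f \<in> {0,1,2,3}" for f using pc E1_sub by (auto simp: restr_def proper_col_def)
  have "(\<pi> a = a \<and> \<pi> b = b) \<or> (\<pi> a = b \<and> \<pi> b = a)" using three[OF pa3(1)] three[OF pa3(2)] pa pb pab by auto
  thus ?thesis
  proof
    assume fx: "\<pi> a = a \<and> \<pi> b = b"
    have pix: "\<pi> x = x" if "x \<in> {0,1,2,3}" for x
      using that three fx pk' p0 by (cases "x = 0") auto
    have "restr (edges G1) e = restr (edges G1) c"
    proof
      fix f show "restr (edges G1) e f = restr (edges G1) c f" using fun_cong[OF r1, of f] pix[OF vals] by simp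
    qed
    hence "e = c" using det[OF pe pc _ r2] by simp
    thus ?thesis using kr_refl[OF wf(2) pc] by simp
  next
    assume sw: "\<pi> a = b \<and> \<pi> b = a"
    have pit: "\<pi> x = tr a b x" if "x \<in> {0,1,2,3}" for x
    proof (cases "x = 0")
      case True
      have "a \<noteq> 0" "b \<noteq> 0" using ab by auto
      thus ?thesis using True p0 by (simp add: tr_def)
    next
      case False
      hence "x = a \<or> x = b \<or> x = k" using three that by blast
      thus ?thesis
      proof (elim disjE)
        assume "x = a" thus ?thesis using sw by (simp add: tr_def)
      next
        assume "x = b" thus ?thesis using sw ab(1) by (simp add: tr_def)
      next
        assume "x = k" thus ?thesis using pk' ab(2,3) by (simp add: tr_def)
      qed
    qed
    define A where "A = {f\<in>inside G S1. c f \<in> {a,b}}"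
    have clA: "closedU G c a b A"
      unfolding closedU_def
    proof (intro conjI ballI impI)
      show "A \<subseteq> {e \<in> edges G. c e \<in> {a, b}}" by (auto simp: A_def inside_def)
    next
      fix f g assume f: "f \<in> A" and g: "g \<in> edges G" and h: "c g \<in> {a, b} \<and> ends G f \<inter> ends G g \<noteq> {}"
      have "ends G f \<subseteq> S1" using f by (auto simp: A_def inside_def)
      hence "ends G g \<inter> S1 \<noteq> {}" using h by blast
      hence "g \<in> inside G S1 \<or> g \<in> {e1,e2}" using edge_cases[OF g] part(2) unfolding inside_def by blast
      moreover have "c e1 \<notin> {a,b}" "c e2 \<notin> {a,b}" using ab k_def cutcol[OF pc] by auto
      ultimately show "g \<in> A" using h by (auto simp: A_def)
    qed
    have "e = kempe_swap c a b A"
    proof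
      fix f
      show "e f = kempe_swap c a b A f"
      proof (cases "f \<in> edges G1")
        case True
        have "e f = \<pi> (c f)" using fun_cong[OF r1, of f] True by (simp add: restr_def)
        also have "\<dots> = tr a b (c f)" using pit vals[of f] True by (simp add: restr_def)
        also have "\<dots> = kempe_swap c a b A f"
        proof (cases "f = e1")
          case True thus ?thesis using ab k_def by (auto simp: tr_def kempe_swap_def A_def cut_not_in1)
        next
          case False
          hence "f \<in> inside G S1" using True E1 by blast
          thus ?thesis by (auto simp: tr_def kempe_swap_def A_def)
        qed
        finally show ?thesis .
      next
        case False
        have fA: "f \<notin> A" using False E1 by (auto simp: A_def)
        show ?thesis
        proof (cases "f \<in> edges G2")
          case True thus ?thesis using fun_cong[OF r2, of f] fA by (simp add: restr_def kempe_swap_def)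
        next
          case nf2: False
          show ?thesis
          proof (cases "f = e2")
            case True thus ?thesis using ee1 cutcol[OF pe] cutcol[OF pc] fA by (simp add: kempe_swap_def)
          next
            case False
            hence "f \<notin> edges G" using nf2 \<open>f \<notin> edges G1\<close> edge_cases E1 E2 by blast
            thus ?thesis using pe pc fA by (simp add: kempe_swap_def proper_col_def)
          qed
        qed
      qed
    qed
    hence "(c,e) \<in> cs G" unfolding cs_def using pc clA ab by blast
    thus ?thesis using kr_sym[OF wf(2) cs_kr[OF wf(2)]] by blast
  qed
qed

lemma surj:
  assumes c1: "c1 \<in> colorings G1" and c2: "c2 \<in> colorings G2"
  shows "\<exists>c\<in>colorings G. (restr (edges G1) c, c1) \<in> kempe_rel G1 \<and> (restr (edges G2) c, c2) \<in> kempe_rel G2"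
proof -
  interpret S: s2 G G2 G1 S2 S1 e1 e2 y1 y2 x1 x2 by (rule sym)
  have psiS: "S.psi = psi" unfolding S.psi_def psi_def ..
  have p1: "proper_col G1 c1" and p2: "proper_col G2 c2" using c1 c2 by (auto simp: colorings_def)
  have finE2: "finite (edges G2)" using S.finE1 .
  have e1E: "e1 \<in> edges G1" "e1 \<in> edges G2" using E1 E2 by auto
  have col1: "c1 e1 \<in> {1,2,3}" using p1 e1E by (auto simp: proper_col_def)
  define cb where "cb = (if c2 e1 = c1 e1 then c2 else tr (c2 e1) (c1 e1) \<circ> c2)"
  have "c2 e1 \<in> {1,2,3}" using p2 e1E by (auto simp: proper_col_def)
  hence cb: "proper_col G2 cb" "(c2, cb) \<in> (cs G2)\<^sup>*" using align_step_g[OF p2 col1] unfolding cb_def by auto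
  have cb1: "cb e1 = c1 e1" by (simp add: cb_def tr_def)
  define c where "c = (\<lambda>f. if f \<in> edges G1 then c1 f else if f = e2 then c1 e1 else cb f)"
  have cc1: "c f = c1 (psi f)" if "f \<in> edges G1 \<or> f = e2" for f
    using that e2_not_E1 by (auto simp: c_def psi_def)
  have cc2: "c f = cb (psi f)" if "f \<in> edges G2 \<or> f = e2" for f
    using that e2_not_E1 cb1 E12 S.e2_not_E1 by (auto simp: c_def psi_def)
  have pc: "proper_col G c"
    unfolding proper_col_def
  proof (intro conjI allI impI ballI)
    fix f assume "f \<notin> edges G"
    hence "f \<notin> edges G1" "f \<noteq> e2" "f \<notin> edges G2" using E1_sub S.E1_sub cut_edges by auto
    thus "c f = 0" using cb(1) by (simp add: c_def proper_col_def)
  next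
    fix f assume "f \<in> edges G"
    hence "f \<in> edges G1 \<or> f = e2 \<or> f \<in> edges G2" using edge_cases E1 E2 by blast
    thus "c f \<in> {1,2,3}" using p1 cb(1) e1E unfolding proper_col_def c_def by auto
  next
    fix f g assume f: "f \<in> edges G" and g: "g \<in> edges G" and h: "f \<noteq> g \<and> ends G f \<inter> ends G g \<noteq> {}"
    obtain w where w: "w \<in> ends G f" "w \<in> ends G g" using h by blast
    have "w \<in> S1 \<or> w \<in> S2" using w wf(3)[OF f] part by blast
    thus "c f \<noteq> c g"
    proof
      assume wS: "w \<in> S1"
      have df: "psi f \<in> edges G1" "w \<in> ends G1 (psi f)" using down_vertex[OF f w(1) wS] by auto
      have dg: "psi g \<in> edges G1" "w \<in> ends G1 (psi g)" using down_vertex[OF g w(2) wS] by auto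
      have "psi f \<noteq> psi g" using psi_ne[OF _ w wS] h by blast
      hence "c1 (psi f) \<noteq> c1 (psi g)" using p1 df dg unfolding proper_col_def by blast
      moreover have "f \<in> edges G1 \<or> f = e2" "g \<in> edges G1 \<or> g = e2"
        using df dg unfolding psi_def by (auto split: if_splits)
      ultimately show ?thesis using cc1 by metis
    next
      assume wS: "w \<in> S2"
      have df: "psi f \<in> edges G2" "w \<in> ends G2 (psi f)" using S.down_vertex[OF f w(1) wS] psiS by auto
      have dg: "psi g \<in> edges G2" "w \<in> ends G2 (psi g)" using S.down_vertex[OF g w(2) wS] psiS by auto
      have "psi f \<noteq> psi g" using S.psi_ne[OF _ w wS] h psiS by auto
      hence "cb (psi f) \<noteq> cb (psi g)" using cb(1) df dg unfolding proper_col_def by blast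
      moreover have "f \<in> edges G2 \<or> f = e2" "g \<in> edges G2 \<or> g = e2"
        using df dg unfolding psi_def by (auto split: if_splits)
      ultimately show ?thesis using cc2 by metis
    qed
  qed
  have r1: "restr (edges G1) c = c1"
  proof
    fix f show "restr (edges G1) c f = c1 f" using p1 by (auto simp: restr_def proper_col_def c_def)
  qed
  have r2: "restr (edges G2) c = cb"
  proof
    fix f show "restr (edges G2) c f = cb f"
      using cc2[of f] cb(1) S.e2_not_E1 by (auto simp: restr_def proper_col_def psi_def)
  qed
  have "(restr (edges G1) c, c1) \<in> kempe_rel G1" using r1 kr_refl[OF finE1 p1] by simp
  moreover have "(restr (edges G2) c, c2) \<in> kempe_rel G2"
    using r2 kr_sym[OF finE2 csr_kr[OF finE2 p2 cb(2)]] by simp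
  ultimately show ?thesis using pc by (auto simp: colorings_def)
qed

lemma is_glue: "glue G G1 G2 (edges G1) (edges G2)"
proof -
  interpret S: s2 G G2 G1 S2 S1 e1 e2 y1 y2 x1 x2 by (rule sym)
  show ?thesis
  proof (unfold_locales)
    show "finite (edges G)" by (rule wf(2))
    show "finite (edges G1)" by (rule finE1)
    show "finite (edges G2)" by (rule S.finE1)
  next
    fix c assume "proper_col G c" thus "proper_col G1 (restr (edges G1) c)" by (rule r_col)
  next
    fix c assume "proper_col G c" thus "proper_col G2 (restr (edges G2) c)" by (rule S.r_col)
  next
    fix c a b U assume "proper_col G c" "a \<in> {1,2,3}" "b \<in> {1,2,3}" "a \<noteq> b" "closedU G c a b U"
    thus "closedU G1 (restr (edges G1) c) a b (U \<inter> edges G1)" using r_cl by blast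
  next
    fix c a b U assume "proper_col G c" "a \<in> {1,2,3}" "b \<in> {1,2,3}" "a \<noteq> b" "closedU G c a b U"
    thus "closedU G2 (restr (edges G2) c) a b (U \<inter> edges G2)" using S.r_cl by blast
  next
    fix c a b U1 assume "proper_col G c" "a \<in> {1,2,3}" "b \<in> {1,2,3}" "a \<noteq> b"
      "closedU G1 (restr (edges G1) c) a b U1"
    thus "\<exists>U. closedU G c a b U \<and> U \<inter> edges G1 = U1 \<and>
      (U \<inter> edges G2 = {} \<or> U \<inter> edges G2 = {f\<in>edges G2. c f \<in> {a,b}})" using lift by blast
  next
    fix c a b U2 assume "proper_col G c" "a \<in> {1,2,3}" "b \<in> {1,2,3}" "a \<noteq> b"
      "closedU G2 (restr (edges G2) c) a b U2"
    thus "\<exists>U. closedU G c a b U \<and> U \<inter> edges G2 = U2 \<and>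
      (U \<inter> edges G1 = {} \<or> U \<inter> edges G1 = {f\<in>edges G1. c f \<in> {a,b}})" using S.lift by blast
  next
    fix e c \<pi> assume "proper_col G e" "proper_col G c" "restr (edges G2) e = restr (edges G2) c"
      "perm3 \<pi>" "restr (edges G1) e = \<pi> \<circ> restr (edges G1) c"
    thus "(e,c) \<in> kempe_rel G" by (rule fix2)
  next
    fix c1 c2 assume "c1 \<in> colorings G1" "c2 \<in> colorings G2"
    thus "\<exists>c\<in>colorings G. (restr (edges G1) c, c1) \<in> kempe_rel G1 \<and> (restr (edges G2) c, c2) \<in> kempe_rel G2"
      by (rule surj)
  qed
qed

lemma result: "Kp G = Kp G1 * Kp G2 \<and> cubic G1 \<and> cubic G2 \<and> (colorable3 G \<longrightarrow> colorable3 G1 \<and> colorable3 G2)"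
proof -
  interpret S: s2 G G2 G1 S2 S1 e1 e2 y1 y2 x1 x2 by (rule sym)
  interpret gl: glue G G1 G2 "edges G1" "edges G2" by (rule is_glue)
  have "colorable3 G \<longrightarrow> colorable3 G1 \<and> colorable3 G2"
    using r_col S.r_col unfolding colorable3_def colorings_def by blast
  thus ?thesis using gl.glue_card cubic1 S.cubic1 by blast
qed

end



lemma split_result:
  assumes cub: "cubic H" and ns: "nontrivial_split H H1 H2"
  shows "Kp H = Kp H1 * Kp H2 \<and> cubic H1 \<and> cubic H2"
proof -
  have "split2 H H1 H2 \<or> split3 H H1 H2" using ns by (simp add: nontrivial_split_def)
  thus ?thesis
  proof
    assume "split2 H H1 H2"
    then obtain S1 S2 e1 e2 x1 x2 y1 y2 where
      "S1 \<union> S2 = verts H" "S1 \<inter> S2 = {}" "e1 \<noteq> e2" "crossing H S1 S2 = {e1,e2}"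
      "ends H e1 = {x1,y1}" "ends H e2 = {x2,y2}"
      "x1 \<in> S1" "x2 \<in> S1" "y1 \<in> S2" "y2 \<in> S2" "x1 \<noteq> x2" "y1 \<noteq> y2"
      "H1 = \<lparr>verts = S1, edges = inside H S1 \<union> {e1}, ends = (ends H)(e1 := {x1,x2})\<rparr>"
      "H2 = \<lparr>verts = S2, edges = inside H S2 \<union> {e1}, ends = (ends H)(e1 := {y1,y2})\<rparr>"
      unfolding split2_def by blast
    hence "s2 H H1 H2 S1 S2 e1 e2 x1 x2 y1 y2" using cub by unfold_locales auto
    thus ?thesis using s2.result by blast
  next
    assume "split3 H H1 H2"
    then obtain S1 S2 e1 e2 e3 x1 x2 x3 y1 y2 y3 v1 v2 where
       "S1 \<union> S2 = verts H" "S1 \<inter> S2 = {}"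
       "distinct [e1,e2,e3]" "crossing H S1 S2 = {e1,e2,e3}"
       "ends H e1 = {x1,y1}" "ends H e2 = {x2,y2}" "ends H e3 = {x3,y3}"
       "x1 \<in> S1" "x2 \<in> S1" "x3 \<in> S1" "y1 \<in> S2" "y2 \<in> S2" "y3 \<in> S2"
       "v1 \<notin> verts H" "v2 \<notin> verts H"
       "H1 = \<lparr>verts = S1 \<union> {v1}, edges = inside H S1 \<union> {e1,e2,e3},
             ends = (ends H)(e1 := {x1,v1}, e2 := {x2,v1}, e3 := {x3,v1})\<rparr>"
       "H2 = \<lparr>verts = S2 \<union> {v2}, edges = inside H S2 \<union> {e1,e2,e3},
             ends = (ends H)(e1 := {y1,v2}, e2 := {y2,v2}, e3 := {y3,v2})\<rparr>"
      unfolding split3_def by blast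
    hence "s3 H H1 H2 S1 S2 e1 e2 e3 x1 x2 x3 y1 y2 y3 v1 v2" using cub by unfold_locales auto
    thus ?thesis using s3.result by blast
  qed
qed

lemma decomp_result:
  assumes "decomposition G M" and "cubic G"
  shows "(\<forall>H\<in>#M. cubic H) \<and> Kp G = (\<Prod>H\<in>#M. Kp H)"
  using assms
proof (induction rule: decomposition.induct)
  case base thus ?case by simp
next
  case (step M H H1 H2)
  have IH: "\<forall>H\<in>#M. cubic H" "Kp G = (\<Prod>H\<in>#M. Kp H)" using step.IH step.prems by auto
  have cH: "cubic H" using IH(1) step.hyps(2) by blast
  have sr: "Kp H = Kp H1 * Kp H2" "cubic H1" "cubic H2" using split_result[OF cH step.hyps(3)] by auto
  have M: "M = add_mset H (M - {#H#})" using step.hyps(2) by simp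
  have "(\<Prod>H\<in>#M. Kp H) = Kp H * (\<Prod>H\<in>#(M - {#H#}). Kp H)"
    by (subst M) simp
  also have "\<dots> = (\<Prod>H\<in>#(M - {#H#} + {#H1, H2#}). Kp H)" using sr(1) by (simp add: ac_simps)
  finally have "Kp G = (\<Prod>H\<in>#(M - {#H#} + {#H1, H2#}). Kp H)" using IH(2) by simp
  moreover have "\<forall>X\<in>#(M - {#H#} + {#H1, H2#}). cubic X"
    using IH(1) sr(2,3) by (auto dest: in_diffD)
  ultimately show ?case by blast
qed

theorem theorem13:
  assumes "cubic G" and "colorable3 G" and "decomposition G M"
  shows "Kp G = (\<Prod>H\<in>#M. Kp H)"
  using decomp_result[OF assms(3) assms(1)] by blast


end
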